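(* Let $A,B$ be finite-range interactions on $\Lambda$, $\kappa\ge0$, and assume $2s(A)\|A\|_\kappa\le\rho<1$. Then there is a constant $C_{\rm BCH}=C_{\rm BCH}(s(A),s(B),\rho)$ such that \[ \sum_{n\ge1}\frac1{n!}\|\mathrm{ad}_A^{\,n}(B)\|_\kappa\le C_{\rm BCH}\|A\|_\kappa\|B\|_\kappa . \] Consequently, with $e^ABe^{-A}-B$ denoting the interaction $\sum_{n\ge1}\frac1{n!}\mathrm{ad}_A^{\,n}(B)$ (convergent in $\|\cdot\|_\kappa$), $\|e^ABe^{-A}-B\|_\kappa\le C_{\rm BCH}\|A\|_\kappa\|B\|_\kappa$.
   Context: $\Lambda=(\mathbb Z/L\mathbb Z)^d$, $L\in2\mathbb N$, fermionic Fock space over $\ell^2(\Lambda)\otimes\mathbb C^2$ with CAR operators $c_{x\sigma}$. $\mathfrak A_X^{\rm even}$: parity-even elements of the algebra generated by $c_{x\sigma},c^*_{x\sigma}$, $x\in X$. An interaction is $\Phi=\{\Phi_X\}_{X\subset\Lambda}$ with $\Phi_X\in\mathfrak A_X^{\rm even}$; finite-range means $\Phi_X=0$ for $\operatorname{diam}X>R$. $\|\Phi\|_\kappa=\sup_x\sum_{X\ni x}e^{\kappa|X|}\|\Phi_X\|$, $s(\Phi)=\sup\{|X|:\Phi_X\neq0\}$, $(\mathrm{ad}_A(B))_Z=\sum_{X\cup Y=Z}[A_X,B_Y]$, $\mathrm{ad}_A^{\,0}(B)=B$, $\mathrm{ad}_A^{\,n}=\mathrm{ad}_A\circ\mathrm{ad}_A^{\,n-1}$.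 *)

theory Defs
  imports "HOL-Analysis.Analysis" "HOL-Library.List_Lexorder"
begin

type_synonym site = "nat list"
type_synonym mode = "site \<times> bool"          \<comment> \<open>(x, sigma), spin in C^2\<close>
type_synonym config = "mode set"             \<comment> \<open>occupation-number basis vector\<close>
type_synonym op = "config \<Rightarrow> config \<Rightarrow> complex"  \<comment> \<open>matrix entries <S|O|T>\<close>

text \<open>The torus (Z/LZ)^d, points as coordinate lists.\<close>
definition lattice :: "nat \<Rightarrow> nat \<Rightarrow> site set" where
  "lattice d L = {x. length x = d \<and> (\<forall>i<d. x ! i < L)}"

definition tdist :: "nat \<Rightarrow> site \<Rightarrow> site \<Rightarrow> nat" where
  "tdist L x y = (\<Sum>i<length x. min (nat \<bar>int (x!i) - int (y!i)\<bar>) (L - nat \<bar>int (x!i) - int (y!i)\<bar>))"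

definition diam :: "nat \<Rightarrow> site set \<Rightarrow> nat" where
  "diam L X = Sup {tdist L x y | x y. x \<in> X \<and> y \<in> X}"

definition modes :: "site set \<Rightarrow> mode set" where
  "modes \<Lambda> = \<Lambda> \<times> UNIV"

definition opmult :: "mode set \<Rightarrow> op \<Rightarrow> op \<Rightarrow> op" where
  "opmult M A B = (\<lambda>S T. if S \<subseteq> M \<and> T \<subseteq> M then (\<Sum>U\<in>Pow M. A S U * B U T) else 0)"

definition opid :: "mode set \<Rightarrow> op" where
  "opid M = (\<lambda>S T. if S \<subseteq> M \<and> S = T then 1 else 0)"

definition comm :: "mode set \<Rightarrow> op \<Rightarrow> op \<Rightarrow> op" where
  "comm M A B = (\<lambda>S T. opmult M A B S T - opmult M B A S T)"

text \<open>Jordan--Wigner sign with respect to the (lexicographic) order of modes.\<close>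
definition mode_less :: "mode \<Rightarrow> mode \<Rightarrow> bool" where
  "mode_less m m' \<longleftrightarrow> fst m < fst m' \<or> (fst m = fst m' \<and> snd m < snd m')"

definition jw :: "mode \<Rightarrow> config \<Rightarrow> complex" where
  "jw m T = (-1) ^ card {m'\<in>T. mode_less m' m}"

definition ann :: "mode set \<Rightarrow> mode \<Rightarrow> op" where
  "ann M m = (\<lambda>S T. if T \<subseteq> M \<and> m \<in> T \<and> S = T - {m} then jw m T else 0)"

definition cre :: "mode set \<Rightarrow> mode \<Rightarrow> op" where
  "cre M m = (\<lambda>S T. if T \<subseteq> M \<and> m \<in> M \<and> m \<notin> T \<and> S = insert m T then jw m T else 0)"

inductive_set alg :: "mode set \<Rightarrow> mode set \<Rightarrow> op set" for M Y where
  alg_id: "opid M \<in> alg M Y"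
| alg_ann: "m \<in> Y \<Longrightarrow> ann M m \<in> alg M Y"
| alg_cre: "m \<in> Y \<Longrightarrow> cre M m \<in> alg M Y"
| alg_add: "A \<in> alg M Y \<Longrightarrow> B \<in> alg M Y \<Longrightarrow> (\<lambda>S T. A S T + B S T) \<in> alg M Y"
| alg_smult: "A \<in> alg M Y \<Longrightarrow> (\<lambda>S T. c * A S T) \<in> alg M Y"
| alg_mult: "A \<in> alg M Y \<Longrightarrow> B \<in> alg M Y \<Longrightarrow> opmult M A B \<in> alg M Y"

definition parity :: "mode set \<Rightarrow> op" where
  "parity M = (\<lambda>S T. if S \<subseteq> M \<and> S = T then (-1) ^ card S else 0)"

definition even_op :: "mode set \<Rightarrow> op \<Rightarrow> bool" where
  "even_op M A \<longleftrightarrow> opmult M (parity M) (opmult M A (parity M)) = A"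

definition loc_even :: "site set \<Rightarrow> site set \<Rightarrow> op set" where
  "loc_even \<Lambda> X = {A \<in> alg (modes \<Lambda>) (modes X). even_op (modes \<Lambda>) A}"

definition opnorm :: "mode set \<Rightarrow> op \<Rightarrow> real" where
  "opnorm M A = Sup {sqrt (\<Sum>S\<in>Pow M. (cmod (\<Sum>T\<in>Pow M. A S T * v T))\<^sup>2) | v.
                       (\<Sum>T\<in>Pow M. (cmod (v T))\<^sup>2) \<le> 1}"

type_synonym interaction = "site set \<Rightarrow> op"

definition is_interaction :: "site set \<Rightarrow> interaction \<Rightarrow> bool" where
  "is_interaction \<Lambda> \<Phi> \<longleftrightarrow> (\<forall>X. (X \<subseteq> \<Lambda> \<longrightarrow> \<Phi> X \<in> loc_even \<Lambda> X) \<and> (\<not> X \<subseteq> \<Lambda> \<longrightarrow> \<Phi> X = (\<lambda>S T. 0)))"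

definition finite_range :: "nat \<Rightarrow> site set \<Rightarrow> interaction \<Rightarrow> bool" where
  "finite_range L \<Lambda> \<Phi> \<longleftrightarrow> (\<exists>R. \<forall>X\<subseteq>\<Lambda>. diam L X > R \<longrightarrow> \<Phi> X = (\<lambda>S T. 0))"

definition knorm :: "site set \<Rightarrow> real \<Rightarrow> interaction \<Rightarrow> real" where
  "knorm \<Lambda> \<kappa> \<Phi> = (SUP x\<in>\<Lambda>. \<Sum>X\<in>{X. X \<subseteq> \<Lambda> \<and> x \<in> X}. exp (\<kappa> * real (card X)) * opnorm (modes \<Lambda>) (\<Phi> X))"

definition ssize :: "site set \<Rightarrow> interaction \<Rightarrow> nat" where
  "ssize \<Lambda> \<Phi> = Sup {card X | X. X \<subseteq> \<Lambda> \<and> \<Phi> X \<noteq> (\<lambda>S T. 0)}"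

definition ad :: "site set \<Rightarrow> interaction \<Rightarrow> interaction \<Rightarrow> interaction" where
  "ad \<Lambda> A B = (\<lambda>Z S T. \<Sum>(X,Y)\<in>{(X,Y). X \<subseteq> \<Lambda> \<and> Y \<subseteq> \<Lambda> \<and> X \<union> Y = Z}.
                       comm (modes \<Lambda>) (A X) (B Y) S T)"

text \<open>n-th partial sum of sum_{n>=1} ad_A^n(B)/n!, and its (componentwise) limit e^A B e^-A - B.\<close>
definition bch_partial :: "site set \<Rightarrow> interaction \<Rightarrow> interaction \<Rightarrow> nat \<Rightarrow> interaction" where
  "bch_partial \<Lambda> A B N = (\<lambda>X S T. \<Sum>n\<in>{1..N}. ((ad \<Lambda> A ^^ n) B) X S T / of_real (fact n))"

definition bch :: "site set \<Rightarrow> interaction \<Rightarrow> interaction \<Rightarrow> interaction" where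
  "bch \<Lambda> A B = (\<lambda>X S T. \<Sum>n. ((ad \<Lambda> A ^^ Suc n) B) X S T / of_real (fact (Suc n)))"

end

theory Submission
  imports Defs
begin

definition supp :: "mode set \<Rightarrow> op \<Rightarrow> bool" where
  "supp M A \<longleftrightarrow> (\<forall>S T. A S T \<noteq> 0 \<longrightarrow> S \<subseteq> M \<and> T \<subseteq> M)"

lemma alg_supp: "A \<in> alg M Y \<Longrightarrow> supp M A"
proof (induction rule: alg.induct)
  case (alg_add A B)
  show ?case unfolding supp_def
  proof (intro allI impI)
    fix S T assume "A S T + B S T \<noteq> 0"
    hence "A S T \<noteq> 0 \<or> B S T \<noteq> 0" by auto
    thus "S \<subseteq> M \<and> T \<subseteq> M" using alg_add.IH unfolding supp_def by blast
  qed
qed (auto simp: supp_def opid_def ann_def cre_def opmult_def)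

lemma opmult_assoc: "opmult M (opmult M A B) C = opmult M A (opmult M B C)"
proof (intro ext)
  fix S T
  show "opmult M (opmult M A B) C S T = opmult M A (opmult M B C) S T"
    unfolding opmult_def
    by (auto simp: sum_distrib_left sum_distrib_right mult.assoc intro: sum.swap)
qed

lemma opmult_add_right: "opmult M A (\<lambda>S T. B S T + C S T) = (\<lambda>S T. opmult M A B S T + opmult M A C S T)"
  by (auto simp: opmult_def distrib_left sum.distrib fun_eq_iff)
lemma opmult_add_left: "opmult M (\<lambda>S T. B S T + C S T) A = (\<lambda>S T. opmult M B A S T + opmult M C A S T)"
  by (auto simp: opmult_def distrib_right sum.distrib fun_eq_iff)
lemma opmult_smult_right: "opmult M A (\<lambda>S T. c * B S T) = (\<lambda>S T. c * opmult M A B S T)"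
  by (auto simp: opmult_def sum_distrib_left ac_simps fun_eq_iff)
lemma opmult_smult_left: "opmult M (\<lambda>S T. c * B S T) A = (\<lambda>S T. c * opmult M B A S T)"
  by (auto simp: opmult_def sum_distrib_left ac_simps fun_eq_iff)

lemma opmult_id_left: "finite M \<Longrightarrow> supp M B \<Longrightarrow> opmult M (opid M) B = B"
proof (intro ext)
  fix S T assume fin: "finite M" and "supp M B"
  show "opmult M (opid M) B S T = B S T"
  proof (cases "S \<subseteq> M \<and> T \<subseteq> M")
    case True
    have "opmult M (opid M) B S T = (\<Sum>U\<in>Pow M. if U = S then B S T else 0)"
      using True unfolding opmult_def opid_def by (auto intro!: sum.cong)
    also have "\<dots> = B S T" using True fin by (simp add: sum.delta)
    finally show ?thesis .
  next
    case False thus ?thesis using \<open>supp M B\<close> by (auto simp: opmult_def supp_def)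
  qed
qed

lemma opmult_id_right: "finite M \<Longrightarrow> supp M B \<Longrightarrow> opmult M B (opid M) = B"
proof (intro ext)
  fix S T assume fin: "finite M" and "supp M B"
  show "opmult M B (opid M) S T = B S T"
  proof (cases "S \<subseteq> M \<and> T \<subseteq> M")
    case True
    have "opmult M B (opid M) S T = (\<Sum>U\<in>Pow M. if U = T then B S T else 0)"
      using True unfolding opmult_def opid_def by (auto intro!: sum.cong)
    also have "\<dots> = B S T" using True fin by (simp add: sum.delta)
    finally show ?thesis .
  next
    case False thus ?thesis using \<open>supp M B\<close> by (auto simp: opmult_def supp_def)
  qed
qed

definition theta :: "mode set \<Rightarrow> op \<Rightarrow> op" where
  "theta M A = opmult M (parity M) (opmult M A (parity M))"

lemma theta_eq: "finite M \<Longrightarrow> theta M A = (\<lambda>S T. if S \<subseteq> M \<and> T \<subseteq> M then (-1)^(card S + card T) * A S T else 0)"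
proof (intro ext)
  fix S T assume fin: "finite M"
  show "theta M A S T = (if S \<subseteq> M \<and> T \<subseteq> M then (-1)^(card S + card T) * A S T else 0)"
  proof (cases "S \<subseteq> M \<and> T \<subseteq> M")
    case True
    have r: "opmult M A (parity M) U T = A U T * (-1)^card T" if "U \<subseteq> M" for U
    proof -
      have "opmult M A (parity M) U T = (\<Sum>V\<in>Pow M. if V = T then A U T * (-1)^card T else 0)"
        using True that unfolding opmult_def parity_def by (auto intro!: sum.cong)
      also have "\<dots> = A U T * (-1)^card T" using True fin by simp
      finally show ?thesis .
    qed
    have "theta M A S T = (\<Sum>U\<in>Pow M. parity M S U * opmult M A (parity M) U T)"
      using True unfolding theta_def opmult_def[of M "parity M"] by simp
    also have "\<dots> = (\<Sum>U\<in>Pow M. if U = S then (-1)^card S * (A S T * (-1)^card T) else 0)"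
      using True r by (intro sum.cong) (auto simp: parity_def)
    also have "\<dots> = (-1)^(card S + card T) * A S T" using True fin by (simp add: power_add)
    finally show ?thesis using True by simp
  next
    case False thus ?thesis by (auto simp: theta_def opmult_def)
  qed
qed

lemma theta_supp: "finite M \<Longrightarrow> supp M A \<Longrightarrow> theta M A = (\<lambda>S T. (-1)^(card S + card T) * A S T)"
  by (auto simp: theta_eq supp_def fun_eq_iff)

lemma theta_mult: "finite M \<Longrightarrow> theta M (opmult M A B) = opmult M (theta M A) (theta M B)"
proof (intro ext)
  fix S T assume fin: "finite M"
  show "theta M (opmult M A B) S T = opmult M (theta M A) (theta M B) S T"
  proof (cases "S \<subseteq> M \<and> T \<subseteq> M")
    case True
    have "(-1::complex)^(card S + card U) * A S U * ((-1)^(card U + card T) * B U T) =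
          (-1)^(card S + card T) * (A S U * B U T)" for U
    proof -
      have e: "(-1::complex)^(2*card U) = 1" by (simp add: power_mult)
      have "(-1::complex)^(card S + card U) * ((-1)^(card U + card T)) = (-1)^(card S + card T) * (-1)^(2*card U)"
        by (simp add: power_add mult_2 ac_simps)
      also have "\<dots> = (-1)^(card S + card T)" using e by simp
      finally have p: "(-1::complex)^(card S + card U) * ((-1)^(card U + card T)) = (-1)^(card S + card T)" .
      have "(-1::complex)^(card S + card U) * A S U * ((-1)^(card U + card T) * B U T) =
            ((-1::complex)^(card S + card U) * ((-1)^(card U + card T))) * (A S U * B U T)"
        by (simp only: mult.assoc mult.left_commute)
      thus ?thesis by (simp only: p)
    qed
    hence "opmult M (theta M A) (theta M B) S T = (\<Sum>U\<in>Pow M. (-1)^(card S + card T) * (A S U * B U T))"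
      using True fin unfolding opmult_def theta_eq[OF fin] by (simp, intro sum.cong) auto
    thus ?thesis using True fin by (simp add: theta_eq opmult_def sum_distrib_left)
  next
    case False thus ?thesis using fin by (auto simp: theta_eq opmult_def)
  qed
qed

lemma theta_add: "finite M \<Longrightarrow> theta M (\<lambda>S T. A S T + B S T) = (\<lambda>S T. theta M A S T + theta M B S T)"
  by (auto simp: theta_eq distrib_left fun_eq_iff)
lemma theta_smult: "finite M \<Longrightarrow> theta M (\<lambda>S T. c * A S T) = (\<lambda>S T. c * theta M A S T)"
  by (auto simp: theta_eq fun_eq_iff)
lemma theta_id: "finite M \<Longrightarrow> theta M (opid M) = opid M"
  by (auto simp: theta_eq opid_def fun_eq_iff simp flip: mult_2)

lemma even_theta: "even_op M A \<longleftrightarrow> theta M A = A"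
  by (simp add: even_op_def theta_def)

lemma ml_irrefl: "\<not> mode_less m m"
  by (auto simp: mode_less_def)
lemma ml_asym: "mode_less m m' \<Longrightarrow> \<not> mode_less m' m"
  by (auto simp: mode_less_def)
lemma ml_total: "m \<noteq> m' \<Longrightarrow> mode_less m m' \<or> mode_less m' m"
  by (cases m; cases m') (auto simp: mode_less_def)

lemma jw_insert: "finite T \<Longrightarrow> m' \<noteq> m \<Longrightarrow> m' \<notin> T \<Longrightarrow>
   jw m (insert m' T) = (if mode_less m' m then - jw m T else jw m T)"
proof -
  assume f: "finite T" and ne: "m' \<noteq> m" and n: "m' \<notin> T"
  show ?thesis
  proof (cases "mode_less m' m")
    case True
    hence "{m''\<in>insert m' T. mode_less m'' m} = insert m' {m''\<in>T. mode_less m'' m}" by auto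
    hence "card {m''\<in>insert m' T. mode_less m'' m} = Suc (card {m''\<in>T. mode_less m'' m})"
      using f n by simp
    thus ?thesis using True by (simp add: jw_def)
  next
    case False
    hence "{m''\<in>insert m' T. mode_less m'' m} = {m''\<in>T. mode_less m'' m}" by auto
    thus ?thesis using False by (simp add: jw_def)
  qed
qed

lemma jw_remove: "finite T \<Longrightarrow> m' \<noteq> m \<Longrightarrow> m' \<in> T \<Longrightarrow>
   jw m (T - {m'}) = (if mode_less m' m then - jw m T else jw m T)"
proof -
  assume f: "finite T" and ne: "m' \<noteq> m" and n: "m' \<in> T"
  have "jw m T = jw m (insert m' (T - {m'}))" using n by (simp add: insert_absorb)
  also have "\<dots> = (if mode_less m' m then - jw m (T - {m'}) else jw m (T - {m'}))"
    using f ne by (intro jw_insert) auto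
  finally show ?thesis by auto
qed

lemma opmult_ann_right: "finite M \<Longrightarrow> opmult M A (ann M m) S T =
   (if S \<subseteq> M \<and> T \<subseteq> M \<and> m \<in> T then A S (T - {m}) * jw m T else 0)"
proof -
  assume fin: "finite M"
  show ?thesis
  proof (cases "S \<subseteq> M \<and> T \<subseteq> M \<and> m \<in> T")
    case True
    have "opmult M A (ann M m) S T = (\<Sum>U\<in>Pow M. if U = T - {m} then A S (T - {m}) * jw m T else 0)"
      using True unfolding opmult_def ann_def by (auto intro!: sum.cong)
    also have "\<dots> = A S (T - {m}) * jw m T" using True fin by auto
    finally show ?thesis using True by simp
  next
    case False thus ?thesis by (auto simp: opmult_def ann_def)
  qed
qed

lemma opmult_cre_right: "finite M \<Longrightarrow> opmult M A (cre M m) S T =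
   (if S \<subseteq> M \<and> T \<subseteq> M \<and> m \<in> M \<and> m \<notin> T then A S (insert m T) * jw m T else 0)"
proof -
  assume fin: "finite M"
  show ?thesis
  proof (cases "S \<subseteq> M \<and> T \<subseteq> M \<and> m \<in> M \<and> m \<notin> T")
    case True
    have "opmult M A (cre M m) S T = (\<Sum>U\<in>Pow M. if U = insert m T then A S (insert m T) * jw m T else 0)"
      using True unfolding opmult_def cre_def by (auto intro!: sum.cong)
    also have "\<dots> = A S (insert m T) * jw m T" using True fin by auto
    finally show ?thesis using True by simp
  next
    case False thus ?thesis by (auto simp: opmult_def cre_def)
  qed
qed

lemma fin_sub: "finite M \<Longrightarrow> T \<subseteq> M \<Longrightarrow> finite T"
  using finite_subset by blast

lemma jw_sign: "finite T \<Longrightarrow> m \<noteq> m' \<Longrightarrow> m \<in> T \<Longrightarrow> m' \<in> T \<Longrightarrow>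
  jw m (T - {m'}) * jw m' T = - (jw m' (T - {m}) * jw m T)"
proof -
  assume f: "finite T" and ne: "m \<noteq> m'" and a: "m \<in> T" and b: "m' \<in> T"
  have r1: "jw m (T - {m'}) = (if mode_less m' m then - jw m T else jw m T)"
    using jw_remove[OF f _ b] ne by simp
  have r2: "jw m' (T - {m}) = (if mode_less m m' then - jw m' T else jw m' T)"
    using jw_remove[OF f _ a] ne by simp
  show ?thesis
  proof (cases "mode_less m' m")
    case True
    hence "\<not> mode_less m m'" using ml_asym by blast
    thus ?thesis using True r1 r2 by simp
  next
    case False
    hence "mode_less m m'" using ml_total ne by blast
    thus ?thesis using False r1 r2 by simp
  qed
qed

lemma jw_sign2: "finite T \<Longrightarrow> m \<noteq> m' \<Longrightarrow> m \<notin> T \<Longrightarrow> m' \<notin> T \<Longrightarrow>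
  jw m (insert m' T) * jw m' T = - (jw m' (insert m T) * jw m T)"
proof -
  assume f: "finite T" and ne: "m \<noteq> m'" and a: "m \<notin> T" and b: "m' \<notin> T"
  have r1: "jw m (insert m' T) = (if mode_less m' m then - jw m T else jw m T)"
    using jw_insert[OF f _ b] ne by simp
  have r2: "jw m' (insert m T) = (if mode_less m m' then - jw m' T else jw m' T)"
    using jw_insert[OF f _ a] ne by simp
  show ?thesis
  proof (cases "mode_less m' m")
    case True
    hence "\<not> mode_less m m'" using ml_asym by blast
    thus ?thesis using True r1 r2 by simp
  next
    case False
    hence "mode_less m m'" using ml_total ne by blast
    thus ?thesis using False r1 r2 by simp
  qed
qed

lemma jw_sign3: "finite T \<Longrightarrow> m \<noteq> m' \<Longrightarrow> m \<in> T \<Longrightarrow> m' \<notin> T \<Longrightarrow>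
  jw m (insert m' T) * jw m' T = - (jw m' (T - {m}) * jw m T)"
proof -
  assume f: "finite T" and ne: "m \<noteq> m'" and a: "m \<in> T" and b: "m' \<notin> T"
  have r1: "jw m (insert m' T) = (if mode_less m' m then - jw m T else jw m T)"
    using jw_insert[OF f _ b] ne by simp
  have r2: "jw m' (T - {m}) = (if mode_less m m' then - jw m' T else jw m' T)"
    using jw_remove[OF f _ a] ne by simp
  show ?thesis
  proof (cases "mode_less m' m")
    case True
    hence "\<not> mode_less m m'" using ml_asym by blast
    thus ?thesis using True r1 r2 by simp
  next
    case False
    hence "mode_less m m'" using ml_total ne by blast
    thus ?thesis using False r1 r2 by simp
  qed
qed

lemma aa: assumes fin: "finite M" and ne: "m \<noteq> m'"
  shows "opmult M (ann M m) (ann M m') S T = - opmult M (ann M m') (ann M m) S T"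
proof -
  define c where "c = (S \<subseteq> M \<and> T \<subseteq> M \<and> m \<in> T \<and> m' \<in> T \<and> S = T - {m} - {m'})"
  have e: "T - {m'} - {m} = T - {m} - {m'}" by blast
  have L: "opmult M (ann M m) (ann M m') S T = (if c then jw m (T - {m'}) * jw m' T else 0)"
    unfolding opmult_ann_right[OF fin] unfolding c_def ann_def e using ne by auto
  have R: "opmult M (ann M m') (ann M m) S T = (if c then jw m' (T - {m}) * jw m T else 0)"
    unfolding opmult_ann_right[OF fin] unfolding c_def ann_def using ne by auto
  show ?thesis
  proof (cases c)
    case True
    hence f: "finite T" "m \<in> T" "m' \<in> T" using fin fin_sub by (auto simp: c_def)
    show ?thesis using L R True by (simp add: jw_sign[OF f(1) ne f(2,3)])
  qed (simp add: L R)
qed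

lemma cc: assumes fin: "finite M" and ne: "m \<noteq> m'"
  shows "opmult M (cre M m) (cre M m') S T = - opmult M (cre M m') (cre M m) S T"
proof -
  define c where "c = (S \<subseteq> M \<and> T \<subseteq> M \<and> m \<in> M \<and> m' \<in> M \<and> m \<notin> T \<and> m' \<notin> T \<and> S = insert m (insert m' T))"
  have e: "insert m' (insert m T) = insert m (insert m' T)" by blast
  have L: "opmult M (cre M m) (cre M m') S T = (if c then jw m (insert m' T) * jw m' T else 0)"
    unfolding opmult_cre_right[OF fin] unfolding c_def cre_def using ne by auto
  have R: "opmult M (cre M m') (cre M m) S T = (if c then jw m' (insert m T) * jw m T else 0)"
    unfolding opmult_cre_right[OF fin] unfolding c_def cre_def e using ne by auto
  show ?thesis
  proof (cases c)
    case True
    hence f: "finite T" "m \<notin> T" "m' \<notin> T" using fin fin_sub by (auto simp: c_def)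
    show ?thesis using L R True by (simp add: jw_sign2[OF f(1) ne f(2,3)])
  qed (simp add: L R)
qed

lemma ac: assumes fin: "finite M" and ne: "m \<noteq> m'"
  shows "opmult M (ann M m) (cre M m') S T = - opmult M (cre M m') (ann M m) S T"
proof -
  define c where "c = (S \<subseteq> M \<and> T \<subseteq> M \<and> m \<in> T \<and> m' \<in> M \<and> m' \<notin> T \<and> S = insert m' (T - {m}))"
  have e: "insert m' T - {m} = insert m' (T - {m})" using ne by blast
  have L: "opmult M (ann M m) (cre M m') S T = (if c then jw m (insert m' T) * jw m' T else 0)"
    unfolding opmult_cre_right[OF fin] unfolding c_def ann_def e using ne by auto
  have R: "opmult M (cre M m') (ann M m) S T = (if c then jw m' (T - {m}) * jw m T else 0)"
    unfolding opmult_ann_right[OF fin] unfolding c_def cre_def using ne by auto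
  show ?thesis
  proof (cases c)
    case True
    hence f: "finite T" "m \<in> T" "m' \<notin> T" using fin fin_sub by (auto simp: c_def)
    show ?thesis using L R True by (simp add: jw_sign3[OF f(1) ne f(2,3)])
  qed (simp add: L R)
qed

definition isgen :: "mode set \<Rightarrow> mode \<Rightarrow> op \<Rightarrow> bool" where
  "isgen M m g \<longleftrightarrow> g = ann M m \<or> g = cre M m"

lemma gen_anticomm: assumes "finite M" "m \<noteq> m'" "isgen M m g" "isgen M m' h"
  shows "opmult M g h = (\<lambda>S T. -1 * opmult M h g S T)"
proof -
  have ca: "opmult M (cre M m) (ann M m') S T = - opmult M (ann M m') (cre M m) S T" for S T
    using ac[OF assms(1), of m' m S T] assms(2) by simp
  show ?thesis using assms(3,4) unfolding isgen_def
    by (elim disjE; clarify; simp add: fun_eq_iff aa[OF assms(1,2)] cc[OF assms(1,2)] ac[OF assms(1,2)] ca)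
qed

lemma gen_theta: assumes fin: "finite M" and g: "isgen M m g"
  shows "theta M g = (\<lambda>S T. -1 * g S T)"
proof -
  have s: "supp M g" using g alg_supp[OF alg.alg_ann[of m "{m}"]] alg_supp[OF alg.alg_cre[of m "{m}"]]
    by (auto simp: isgen_def)
  have "(-1::complex)^(card S + card T) * g S T = -1 * g S T" for S T
  proof (cases "g S T = 0")
    case False
    hence sub: "S \<subseteq> M" "T \<subseteq> M" using s by (auto simp: supp_def)
    hence fT: "finite T" "finite S" using fin fin_sub by blast+
    have "odd (card S + card T)"
    proof (cases "g = ann M m")
      case True
      hence "m \<in> T" "S = T - {m}" using False by (auto simp: ann_def split: if_splits)
      hence "card T = Suc (card S)" using card_Suc_Diff1[OF fT(1)] by simp
      thus ?thesis by simp
    next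
      case c: False
      hence "g = cre M m" using g by (auto simp: isgen_def)
      hence "m \<notin> T" "S = insert m T" using False by (auto simp: cre_def split: if_splits)
      hence "card S = Suc (card T)" using fT by simp
      thus ?thesis by simp
    qed
    thus ?thesis by simp
  qed simp
  thus ?thesis using theta_supp[OF fin s] by simp
qed

lemma supp_gen: "isgen M m g \<Longrightarrow> supp M g"
  using alg_supp[OF alg.alg_ann[of m "{m}"]] alg_supp[OF alg.alg_cre[of m "{m}"]]
  by (auto simp: isgen_def)

lemma comm_gen:
  assumes fin: "finite M" and g: "isgen M m g" and m: "m \<notin> Y2"
  shows "B \<in> alg M Y2 \<Longrightarrow> opmult M g B = opmult M (theta M B) g"
proof (induction rule: alg.induct)
  case alg_id
  show ?case using supp_gen[OF g] fin by (simp add: theta_id opmult_id_left opmult_id_right)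
next
  case (alg_ann m')
  have h: "isgen M m' (ann M m')" by (simp add: isgen_def)
  have "m \<noteq> m'" using alg_ann m by auto
  hence e1: "opmult M g (ann M m') = (\<lambda>S T. -1 * opmult M (ann M m') g S T)"
    using gen_anticomm[OF fin _ g h] by blast
  have e2: "theta M (ann M m') = (\<lambda>S T. -1 * ann M m' S T)" using gen_theta[OF fin h] .
  show ?case by (simp only: e1 e2 opmult_smult_left)
next
  case (alg_cre m')
  have h: "isgen M m' (cre M m')" by (simp add: isgen_def)
  have "m \<noteq> m'" using alg_cre m by auto
  hence e1: "opmult M g (cre M m') = (\<lambda>S T. -1 * opmult M (cre M m') g S T)"
    using gen_anticomm[OF fin _ g h] by blast
  have e2: "theta M (cre M m') = (\<lambda>S T. -1 * cre M m' S T)" using gen_theta[OF fin h] .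
  show ?case by (simp only: e1 e2 opmult_smult_left)
next
  case (alg_add A B)
  thus ?case by (simp add: opmult_add_right opmult_add_left theta_add[OF fin])
next
  case (alg_smult A c)
  thus ?case by (simp add: opmult_smult_right opmult_smult_left theta_smult[OF fin])
next
  case (alg_mult A B)
  have "opmult M g (opmult M A B) = opmult M (opmult M g A) B" by (simp add: opmult_assoc)
  also have "\<dots> = opmult M (theta M A) (opmult M g B)" using alg_mult by (simp add: opmult_assoc)
  also have "\<dots> = opmult M (theta M (opmult M A B)) g" using alg_mult
    by (simp add: opmult_assoc theta_mult[OF fin])
  finally show ?case .
qed

lemma comm_even:
  assumes fin: "finite M" and disj: "Y1 \<inter> Y2 = {}" and B: "B \<in> alg M Y2" and ev: "theta M B = B"
  shows "A \<in> alg M Y1 \<Longrightarrow> opmult M A B = opmult M B A"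
proof (induction rule: alg.induct)
  case alg_id
  show ?case using alg_supp[OF B] fin by (simp add: opmult_id_left opmult_id_right)
next
  case (alg_ann m)
  have mY: "m \<notin> Y2" using disj alg_ann by auto
  have gg: "isgen M m (ann M m)" by (simp add: isgen_def)
  have "opmult M (ann M m) B = opmult M (theta M B) (ann M m)" by (rule comm_gen[OF fin gg mY B])
  thus ?case using ev by simp
next
  case (alg_cre m)
  have mY: "m \<notin> Y2" using disj alg_cre by auto
  have gg: "isgen M m (cre M m)" by (simp add: isgen_def)
  have "opmult M (cre M m) B = opmult M (theta M B) (cre M m)" by (rule comm_gen[OF fin gg mY B])
  thus ?case using ev by simp
next
  case (alg_add A1 A2)
  thus ?case by (simp add: opmult_add_right opmult_add_left)
next
  case (alg_smult A c)
  thus ?case by (simp add: opmult_smult_right opmult_smult_left)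
next
  case (alg_mult A1 A2)
  have "opmult M (opmult M A1 A2) B = opmult M A1 (opmult M A2 B)" by (rule opmult_assoc)
  also have "\<dots> = opmult M A1 (opmult M B A2)" using alg_mult by simp
  also have "\<dots> = opmult M (opmult M A1 B) A2" by (rule opmult_assoc[symmetric])
  also have "\<dots> = opmult M (opmult M B A1) A2" using alg_mult by simp
  also have "\<dots> = opmult M B (opmult M A1 A2)" by (rule opmult_assoc)
  finally show ?case .
qed

lemma comm_zero:
  assumes "finite M" "Y1 \<inter> Y2 = {}" "B \<in> alg M Y2" "theta M B = B" "A \<in> alg M Y1"
  shows "comm M A B = (\<lambda>S T. 0)"
  using comm_even[OF assms] by (simp add: comm_def)

lemma alg_mono: "A \<in> alg M Y \<Longrightarrow> Y \<subseteq> Y' \<Longrightarrow> A \<in> alg M Y'"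
  by (induction rule: alg.induct) (auto intro: alg.intros)

lemma alg_zero: "(\<lambda>S T. 0) \<in> alg M Y"
proof -
  have "(\<lambda>S T. (0::complex) * opid M S T) \<in> alg M Y" by (rule alg.alg_smult[OF alg.alg_id])
  thus ?thesis by simp
qed

lemma alg_comm: "A \<in> alg M Y \<Longrightarrow> B \<in> alg M Y \<Longrightarrow> comm M A B \<in> alg M Y"
proof -
  assume a: "A \<in> alg M Y" and b: "B \<in> alg M Y"
  have "(\<lambda>S T. opmult M A B S T + (-1) * opmult M B A S T) \<in> alg M Y"
    by (intro alg.alg_add alg.alg_smult alg.alg_mult a b)
  thus ?thesis by (simp add: comm_def)
qed

lemma alg_sum: "finite P \<Longrightarrow> (\<And>p. p \<in> P \<Longrightarrow> f p \<in> alg M Y) \<Longrightarrow> (\<lambda>S T. \<Sum>p\<in>P. f p S T) \<in> alg M Y"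
proof (induction P rule: finite_induct)
  case empty thus ?case using alg_zero by simp
next
  case (insert x F)
  have "(\<lambda>S T. f x S T + (\<lambda>S T. \<Sum>p\<in>F. f p S T) S T) \<in> alg M Y"
    using insert by (intro alg.alg_add) auto
  thus ?case using insert by simp
qed

lemma theta_comm: "finite M \<Longrightarrow> theta M (comm M A B) = comm M (theta M A) (theta M B)"
proof -
  assume fin: "finite M"
  have c: "comm M X Y = (\<lambda>S T. opmult M X Y S T + (-1) * opmult M Y X S T)" for X Y
    by (simp add: comm_def fun_eq_iff)
  show ?thesis unfolding c by (simp only: theta_add[OF fin] theta_smult[OF fin] theta_mult[OF fin])
qed

lemma theta_sum: "finite M \<Longrightarrow> theta M (\<lambda>S T. \<Sum>p\<in>P. f p S T) = (\<lambda>S T. \<Sum>p\<in>P. theta M (f p) S T)"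
proof -
  assume fin: "finite M"
  show ?thesis
  proof (intro ext)
    fix S T show "theta M (\<lambda>S T. \<Sum>p\<in>P. f p S T) S T = (\<Sum>p\<in>P. theta M (f p) S T)"
      by (cases "S \<subseteq> M"; cases "T \<subseteq> M") (simp_all add: theta_eq[OF fin] sum_distrib_left)
  qed
qed

definition apl :: "mode set \<Rightarrow> op \<Rightarrow> (config \<Rightarrow> complex) \<Rightarrow> config \<Rightarrow> complex" where
  "apl M A v = (\<lambda>S. \<Sum>T\<in>Pow M. A S T * v T)"
definition vn :: "mode set \<Rightarrow> (config \<Rightarrow> complex) \<Rightarrow> real" where
  "vn M v = L2_set (\<lambda>S. cmod (v S)) (Pow M)"
definition l1 :: "mode set \<Rightarrow> op \<Rightarrow> real" where
  "l1 M A = (\<Sum>S\<in>Pow M. \<Sum>T\<in>Pow M. cmod (A S T))"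

lemma L2_set_zero[simp]: "L2_set (\<lambda>S. 0) A = 0"
  by (simp add: L2_set_0')

lemma opnorm_alt: "opnorm M A = Sup {vn M (apl M A v) | v. vn M v \<le> 1}"
proof -
  have "{sqrt (\<Sum>S\<in>Pow M. (cmod (\<Sum>T\<in>Pow M. A S T * v T))\<^sup>2) | v. (\<Sum>T\<in>Pow M. (cmod (v T))\<^sup>2) \<le> 1}
      = {vn M (apl M A v) | v. vn M v \<le> 1}"
    by (simp add: vn_def apl_def L2_set_def)
  thus ?thesis by (simp add: opnorm_def)
qed

lemma vn_nonneg: "0 \<le> vn M v" by (simp add: vn_def)

lemma vn_entry: "finite M \<Longrightarrow> T \<subseteq> M \<Longrightarrow> cmod (v T) \<le> vn M v"
  unfolding vn_def by (rule member_le_L2_set) auto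

lemma vn_apl_le_l1: assumes fin: "finite M" and v: "vn M v \<le> 1"
  shows "vn M (apl M A v) \<le> l1 M A"
proof -
  have c: "cmod (apl M A v S) \<le> (\<Sum>T\<in>Pow M. cmod (A S T))" for S
  proof -
    have "cmod (apl M A v S) \<le> (\<Sum>T\<in>Pow M. cmod (A S T * v T))"
      unfolding apl_def by (rule norm_sum)
    also have "\<dots> \<le> (\<Sum>T\<in>Pow M. cmod (A S T))"
    proof (rule sum_mono)
      fix T assume "T \<in> Pow M"
      hence "cmod (v T) \<le> 1" using vn_entry[OF fin, of T v] v by auto
      thus "cmod (A S T * v T) \<le> cmod (A S T)"
        by (simp add: norm_mult mult_left_le)
    qed
    finally show ?thesis .
  qed
  have "vn M (apl M A v) \<le> (\<Sum>S\<in>Pow M. cmod (apl M A v S))"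
    unfolding vn_def by (rule L2_set_le_sum) auto
  also have "\<dots> \<le> l1 M A" unfolding l1_def by (rule sum_mono) (rule c)
  finally show ?thesis .
qed

lemma opset_bdd: "finite M \<Longrightarrow> bdd_above {vn M (apl M A v) | v. vn M v \<le> 1}"
  using vn_apl_le_l1 by (auto intro!: bdd_aboveI[where M="l1 M A"])

lemma vn_zero: "vn M (\<lambda>S. 0) = 0" by (simp add: vn_def)

lemma apl_zero: "apl M A (\<lambda>S. 0) = (\<lambda>S. 0)" by (simp add: apl_def)

lemma opset_ne: "{vn M (apl M A v) | v. vn M v \<le> 1} \<noteq> {}"
proof -
  have "vn M (\<lambda>S. 0) \<le> 1" by (simp add: vn_zero)
  thus ?thesis by blast
qed

lemma opnorm_upper: "finite M \<Longrightarrow> vn M v \<le> 1 \<Longrightarrow> vn M (apl M A v) \<le> opnorm M A"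
  unfolding opnorm_alt by (rule cSup_upper) (auto intro: opset_bdd)

lemma opnorm_nonneg: "finite M \<Longrightarrow> 0 \<le> opnorm M A"
  using opnorm_upper[of M "\<lambda>S. 0" A] by (simp add: vn_zero apl_zero)

lemma opnorm_le: "(\<And>v. vn M v \<le> 1 \<Longrightarrow> vn M (apl M A v) \<le> K) \<Longrightarrow> opnorm M A \<le> K"
  unfolding opnorm_alt by (rule cSup_least) (use opset_ne in auto)

lemma opnorm_le_l1: "finite M \<Longrightarrow> opnorm M A \<le> l1 M A"
  by (intro opnorm_le vn_apl_le_l1)

lemma L2_set_div: "0 < r \<Longrightarrow> L2_set (\<lambda>S. f S / r) A = (1/r) * L2_set f A"
proof -
  assume r: "0 < r"
  have "L2_set (\<lambda>S. f S / r) A = L2_set (\<lambda>S. (1/r) * f S) A" by simp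
  also have "\<dots> = (1/r) * L2_set f A"
  proof -
    have "0 \<le> 1/r" using r by simp
    from L2_set_right_distrib[OF this, of f A] show ?thesis by (rule sym)
  qed
  finally show ?thesis .
qed

lemma apl_bound: assumes fin: "finite M" shows "vn M (apl M A v) \<le> opnorm M A * vn M v"
proof (cases "vn M v = 0")
  case True
  hence "\<forall>T\<in>Pow M. cmod (v T) = 0" unfolding vn_def using fin by (simp add: L2_set_eq_0_iff)
  hence "apl M A v S = 0" for S by (simp add: apl_def)
  thus ?thesis using True by (simp add: vn_def)
next
  case False
  define r where "r = vn M v"
  have r: "r > 0" using False vn_nonneg[of M v] by (simp add: r_def)
  define w where "w = (\<lambda>T. v T / of_real r)"
  have "vn M w = (1/r) * vn M v"
    unfolding vn_def w_def using r by (simp add: L2_set_div norm_divide)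
  hence "vn M w \<le> 1" using r by (simp add: r_def)
  hence "vn M (apl M A w) \<le> opnorm M A" by (rule opnorm_upper[OF fin])
  moreover have "apl M A w = (\<lambda>S. apl M A v S / of_real r)"
    by (simp add: apl_def w_def sum_divide_distrib)
  moreover have "vn M (\<lambda>S. apl M A v S / of_real r) = (1/r) * vn M (apl M A v)"
    unfolding vn_def using r by (simp add: L2_set_div norm_divide)
  ultimately have "vn M (apl M A v) / r \<le> opnorm M A" by simp
  thus ?thesis using r by (simp add: r_def pos_divide_le_eq mult.commute)
qed

lemma vn_add: "vn M (\<lambda>S. x S + y S) \<le> vn M x + vn M y"
proof -
  have "vn M (\<lambda>S. x S + y S) \<le> L2_set (\<lambda>S. cmod (x S) + cmod (y S)) (Pow M)"
    unfolding vn_def by (rule L2_set_mono) (auto intro: norm_triangle_ineq)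
  also have "\<dots> \<le> vn M x + vn M y" unfolding vn_def by (rule L2_set_triangle_ineq)
  finally show ?thesis .
qed

lemma opnorm_add: assumes fin: "finite M"
  shows "opnorm M (\<lambda>S T. A S T + B S T) \<le> opnorm M A + opnorm M B"
proof (rule opnorm_le)
  fix v assume v: "vn M v \<le> 1"
  have "apl M (\<lambda>S T. A S T + B S T) v = (\<lambda>S. apl M A v S + apl M B v S)"
    by (simp add: apl_def distrib_right sum.distrib)
  hence "vn M (apl M (\<lambda>S T. A S T + B S T) v) \<le> vn M (apl M A v) + vn M (apl M B v)"
    using vn_add by metis
  also have "\<dots> \<le> opnorm M A * vn M v + opnorm M B * vn M v"
    by (intro add_mono apl_bound[OF fin])
  also have "\<dots> \<le> opnorm M A + opnorm M B"
    using v opnorm_nonneg[OF fin] vn_nonneg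
    by (intro add_mono mult_left_le) auto
  finally show "vn M (apl M (\<lambda>S T. A S T + B S T) v) \<le> opnorm M A + opnorm M B" .
qed

lemma opnorm_smult: assumes fin: "finite M"
  shows "opnorm M (\<lambda>S T. c * A S T) \<le> cmod c * opnorm M A"
proof (rule opnorm_le)
  fix v assume v: "vn M v \<le> 1"
  have "apl M (\<lambda>S T. c * A S T) v = (\<lambda>S. c * apl M A v S)"
    by (simp add: apl_def sum_distrib_left mult.assoc)
  moreover have "vn M (\<lambda>S. c * apl M A v S) = cmod c * vn M (apl M A v)"
    unfolding vn_def by (simp add: L2_set_right_distrib norm_mult)
  moreover have "cmod c * vn M (apl M A v) \<le> cmod c * opnorm M A"
    using opnorm_upper[OF fin v] by (simp add: mult_left_mono)
  ultimately show "vn M (apl M (\<lambda>S T. c * A S T) v) \<le> cmod c * opnorm M A" by simp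
qed

lemma apl_mult: "S \<in> Pow M \<Longrightarrow> apl M (opmult M A B) v S = apl M A (apl M B v) S"
proof -
  assume S: "S \<in> Pow M"
  have "apl M (opmult M A B) v S = (\<Sum>T\<in>Pow M. \<Sum>U\<in>Pow M. A S U * B U T * v T)"
    unfolding apl_def opmult_def using S by (intro sum.cong refl) (auto simp: sum_distrib_right)
  also have "\<dots> = (\<Sum>U\<in>Pow M. \<Sum>T\<in>Pow M. A S U * B U T * v T)" by (rule sum.swap)
  also have "\<dots> = apl M A (apl M B v) S"
    unfolding apl_def by (intro sum.cong refl) (simp add: sum_distrib_left mult.assoc)
  finally show ?thesis .
qed

lemma opnorm_mult: assumes fin: "finite M"
  shows "opnorm M (opmult M A B) \<le> opnorm M A * opnorm M B"
proof (rule opnorm_le)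
  fix v assume v: "vn M v \<le> 1"
  have "vn M (apl M (opmult M A B) v) = vn M (apl M A (apl M B v))"
    unfolding vn_def by (rule L2_set_cong) (auto simp: apl_mult)
  also have "\<dots> \<le> opnorm M A * vn M (apl M B v)" by (rule apl_bound[OF fin])
  also have "\<dots> \<le> opnorm M A * opnorm M B"
    using opnorm_upper[OF fin v] opnorm_nonneg[OF fin] by (simp add: mult_left_mono)
  finally show "vn M (apl M (opmult M A B) v) \<le> opnorm M A * opnorm M B" .
qed

lemma opnorm_comm: assumes fin: "finite M"
  shows "opnorm M (comm M A B) \<le> 2 * opnorm M A * opnorm M B"
proof -
  have c: "comm M A B = (\<lambda>S T. opmult M A B S T + (-1) * opmult M B A S T)"
    by (simp add: comm_def fun_eq_iff)
  have "opnorm M (comm M A B) \<le> opnorm M (opmult M A B) + opnorm M (\<lambda>S T. (-1) * opmult M B A S T)"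
    unfolding c by (rule opnorm_add[OF fin])
  also have "\<dots> \<le> opnorm M A * opnorm M B + opnorm M B * opnorm M A"
  proof -
    have "opnorm M (\<lambda>S T. (-1) * opmult M B A S T) \<le> cmod (-1) * opnorm M (opmult M B A)"
      by (rule opnorm_smult[OF fin])
    hence "opnorm M (\<lambda>S T. (-1) * opmult M B A S T) \<le> opnorm M B * opnorm M A"
      using opnorm_mult[OF fin, of B A] by simp
    thus ?thesis using opnorm_mult[OF fin, of A B] by linarith
  qed
  finally show ?thesis by simp
qed

lemma opnorm_entry: assumes fin: "finite M" and S: "S \<subseteq> M" and T: "T \<subseteq> M"
  shows "cmod (A S T) \<le> opnorm M A"
proof -
  define v where "v = (\<lambda>U. if U = T then (1::complex) else 0)"
  have "vn M v = sqrt (\<Sum>U\<in>Pow M. (if U = T then 1 else 0))"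
    unfolding vn_def L2_set_def v_def by (intro arg_cong[where f=sqrt] sum.cong) auto
  also have "\<dots> = 1" using fin T by simp
  finally have v1: "vn M v \<le> 1" by simp
  have "apl M A v = (\<lambda>S. A S T)"
  proof
    fix S
    have "apl M A v S = (\<Sum>U\<in>Pow M. if U = T then A S T else 0)"
      unfolding apl_def v_def by (intro sum.cong) auto
    thus "apl M A v S = A S T" using fin T by simp
  qed
  hence "cmod (A S T) \<le> vn M (apl M A v)" using vn_entry[OF fin S, of "apl M A v"] by simp
  also have "\<dots> \<le> opnorm M A" by (rule opnorm_upper[OF fin v1])
  finally show ?thesis .
qed

lemma opnorm_zero: "finite M \<Longrightarrow> opnorm M (\<lambda>S T. 0) = 0"
  using opnorm_nonneg[of M "\<lambda>S T. 0"] opnorm_le[of M "\<lambda>S T. 0" 0]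
  by (simp add: apl_def vn_def)

lemma opnorm_sum: assumes fin: "finite M"
  shows "opnorm M (\<lambda>S T. \<Sum>p\<in>P. f p S T) \<le> (\<Sum>p\<in>P. opnorm M (f p))"
proof (cases "finite P")
  case True
  thus ?thesis
  proof (induction P rule: finite_induct)
    case empty thus ?case using opnorm_zero[OF fin] by simp
  next
    case (insert x F)
    have "opnorm M (\<lambda>S T. \<Sum>p\<in>insert x F. f p S T) = opnorm M (\<lambda>S T. f x S T + (\<lambda>S T. \<Sum>p\<in>F. f p S T) S T)"
      using insert by simp
    also have "\<dots> \<le> opnorm M (f x) + opnorm M (\<lambda>S T. \<Sum>p\<in>F. f p S T)"
      by (rule opnorm_add[OF fin])
    also have "\<dots> \<le> opnorm M (f x) + (\<Sum>p\<in>F. opnorm M (f p))" using insert by simp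
    finally show ?case using insert by simp
  qed
next
  case False thus ?thesis using opnorm_zero[OF fin] by simp
qed

definition wt :: "real \<Rightarrow> site set \<Rightarrow> real" where
  "wt \<kappa> X = exp (\<kappa> * real (card X))"

definition Fx :: "site set \<Rightarrow> real \<Rightarrow> interaction \<Rightarrow> site \<Rightarrow> real" where
  "Fx \<Lambda> \<kappa> \<Phi> x = (\<Sum>X\<in>{X. X \<subseteq> \<Lambda> \<and> x \<in> X}. wt \<kappa> X * opnorm (modes \<Lambda>) (\<Phi> X))"

lemma knorm_alt: "knorm \<Lambda> \<kappa> \<Phi> = (SUP x\<in>\<Lambda>. Fx \<Lambda> \<kappa> \<Phi> x)"
  by (simp add: knorm_def Fx_def wt_def)

lemma finite_modes: "finite \<Lambda> \<Longrightarrow> finite (modes \<Lambda>)"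
  by (simp add: modes_def)

lemma modes_Un: "modes (X \<union> Y) = modes X \<union> modes Y"
  by (auto simp: modes_def)

lemma modes_disj: "X \<inter> Y = {} \<Longrightarrow> modes X \<inter> modes Y = {}"
  by (auto simp: modes_def)

lemma modes_mono: "X \<subseteq> Y \<Longrightarrow> modes X \<subseteq> modes Y"
  by (auto simp: modes_def)

lemma wt_pos: "0 < wt \<kappa> X" by (simp add: wt_def)

lemma wt_ge1: "0 \<le> \<kappa> \<Longrightarrow> 1 \<le> wt \<kappa> X" by (simp add: wt_def)

lemma wt_Un: assumes "0 \<le> \<kappa>" "finite X" "finite Y" shows "wt \<kappa> (X \<union> Y) \<le> wt \<kappa> X * wt \<kappa> Y"
proof -
  have "real (card (X \<union> Y)) \<le> real (card X) + real (card Y)"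
    using card_Un_le[of X Y] by linarith
  hence "\<kappa> * real (card (X \<union> Y)) \<le> \<kappa> * real (card X) + \<kappa> * real (card Y)"
    using assms(1) by (metis distrib_left mult_left_mono)
  thus ?thesis by (simp add: wt_def exp_add[symmetric])
qed

lemma Fx_nonneg: "finite \<Lambda> \<Longrightarrow> 0 \<le> Fx \<Lambda> \<kappa> \<Phi> x"
  unfolding Fx_def by (intro sum_nonneg mult_nonneg_nonneg opnorm_nonneg finite_modes) (auto intro: less_imp_le wt_pos)

lemma knorm_upper: "finite \<Lambda> \<Longrightarrow> x \<in> \<Lambda> \<Longrightarrow> Fx \<Lambda> \<kappa> \<Phi> x \<le> knorm \<Lambda> \<kappa> \<Phi>"
  unfolding knorm_alt by (rule cSUP_upper) auto

lemma knorm_le: "\<Lambda> \<noteq> {} \<Longrightarrow> (\<And>x. x \<in> \<Lambda> \<Longrightarrow> Fx \<Lambda> \<kappa> \<Phi> x \<le> K) \<Longrightarrow> knorm \<Lambda> \<kappa> \<Phi> \<le> K"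
  unfolding knorm_alt by (rule cSUP_least) auto

lemma knorm_nonneg: "finite \<Lambda> \<Longrightarrow> \<Lambda> \<noteq> {} \<Longrightarrow> 0 \<le> knorm \<Lambda> \<kappa> \<Phi>"
  using Fx_nonneg knorm_upper by (meson all_not_in_conv order_trans)

lemma knorm_add: assumes "finite \<Lambda>" "\<Lambda> \<noteq> {}"
  shows "knorm \<Lambda> \<kappa> (\<lambda>X S T. \<Phi> X S T + \<Psi> X S T) \<le> knorm \<Lambda> \<kappa> \<Phi> + knorm \<Lambda> \<kappa> \<Psi>"
proof (rule knorm_le[OF assms(2)])
  fix x assume x: "x \<in> \<Lambda>"
  have "Fx \<Lambda> \<kappa> (\<lambda>X S T. \<Phi> X S T + \<Psi> X S T) x \<le> Fx \<Lambda> \<kappa> \<Phi> x + Fx \<Lambda> \<kappa> \<Psi> x"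
    unfolding Fx_def sum.distrib[symmetric] distrib_left[symmetric]
    by (intro sum_mono mult_left_mono opnorm_add finite_modes assms(1)) (auto intro: less_imp_le wt_pos)
  also have "\<dots> \<le> knorm \<Lambda> \<kappa> \<Phi> + knorm \<Lambda> \<kappa> \<Psi>"
    by (intro add_mono knorm_upper assms(1) x)
  finally show "Fx \<Lambda> \<kappa> (\<lambda>X S T. \<Phi> X S T + \<Psi> X S T) x \<le> knorm \<Lambda> \<kappa> \<Phi> + knorm \<Lambda> \<kappa> \<Psi>" .
qed

lemma knorm_smult: assumes "finite \<Lambda>" "\<Lambda> \<noteq> {}"
  shows "knorm \<Lambda> \<kappa> (\<lambda>X S T. c * \<Phi> X S T) \<le> cmod c * knorm \<Lambda> \<kappa> \<Phi>"
proof (rule knorm_le[OF assms(2)])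
  fix x assume x: "x \<in> \<Lambda>"
  have "Fx \<Lambda> \<kappa> (\<lambda>X S T. c * \<Phi> X S T) x \<le> cmod c * Fx \<Lambda> \<kappa> \<Phi> x"
    unfolding Fx_def sum_distrib_left
  proof (intro sum_mono)
    fix X
    have "wt \<kappa> X * opnorm (modes \<Lambda>) (\<lambda>S T. c * \<Phi> X S T) \<le> wt \<kappa> X * (cmod c * opnorm (modes \<Lambda>) (\<Phi> X))"
      by (rule mult_left_mono[OF opnorm_smult[OF finite_modes[OF assms(1)]] less_imp_le[OF wt_pos]])
    thus "wt \<kappa> X * opnorm (modes \<Lambda>) (\<lambda>S T. c * \<Phi> X S T) \<le> cmod c * (wt \<kappa> X * opnorm (modes \<Lambda>) (\<Phi> X))"
      by (simp add: ac_simps)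
  qed
  also have "\<dots> \<le> cmod c * knorm \<Lambda> \<kappa> \<Phi>"
    by (intro mult_left_mono knorm_upper assms(1) x) auto
  finally show "Fx \<Lambda> \<kappa> (\<lambda>X S T. c * \<Phi> X S T) x \<le> cmod c * knorm \<Lambda> \<kappa> \<Phi>" .
qed

lemma knorm_zero: assumes "finite \<Lambda>" "\<Lambda> \<noteq> {}"
  shows "knorm \<Lambda> \<kappa> (\<lambda>X S T. 0) = 0"
proof -
  have "knorm \<Lambda> \<kappa> (\<lambda>X S T. 0) \<le> 0"
    by (rule knorm_le[OF assms(2)]) (simp add: Fx_def opnorm_zero finite_modes assms(1))
  thus ?thesis using knorm_nonneg[OF assms, of \<kappa> "\<lambda>X S T. 0"] by linarith
qed

lemma knorm_sum: assumes "finite \<Lambda>" "\<Lambda> \<noteq> {}" "finite N"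
  shows "knorm \<Lambda> \<kappa> (\<lambda>X S T. \<Sum>n\<in>N. f n X S T) \<le> (\<Sum>n\<in>N. knorm \<Lambda> \<kappa> (f n))"
  using assms(3)
proof (induction N rule: finite_induct)
  case empty thus ?case using knorm_zero[OF assms(1,2)] by simp
next
  case (insert n N)
  have "knorm \<Lambda> \<kappa> (\<lambda>X S T. \<Sum>n\<in>insert n N. f n X S T) =
        knorm \<Lambda> \<kappa> (\<lambda>X S T. f n X S T + (\<lambda>X S T. \<Sum>n\<in>N. f n X S T) X S T)"
    using insert by simp
  also have "\<dots> \<le> knorm \<Lambda> \<kappa> (f n) + knorm \<Lambda> \<kappa> (\<lambda>X S T. \<Sum>n\<in>N. f n X S T)"
    by (rule knorm_add[OF assms(1,2)])
  also have "\<dots> \<le> knorm \<Lambda> \<kappa> (f n) + (\<Sum>n\<in>N. knorm \<Lambda> \<kappa> (f n))" using insert by simp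
  finally show ?case using insert by simp
qed

lemma knorm_le_l1: assumes "finite \<Lambda>" "\<Lambda> \<noteq> {}"
  shows "knorm \<Lambda> \<kappa> \<Phi> \<le> (\<Sum>X\<in>Pow \<Lambda>. wt \<kappa> X * l1 (modes \<Lambda>) (\<Phi> X))"
proof (rule knorm_le[OF assms(2)])
  fix x assume x: "x \<in> \<Lambda>"
  have "Fx \<Lambda> \<kappa> \<Phi> x \<le> (\<Sum>X\<in>{X. X \<subseteq> \<Lambda> \<and> x \<in> X}. wt \<kappa> X * l1 (modes \<Lambda>) (\<Phi> X))"
    unfolding Fx_def
    by (intro sum_mono mult_left_mono opnorm_le_l1 finite_modes assms(1)) (auto intro: less_imp_le wt_pos)
  also have "\<dots> \<le> (\<Sum>X\<in>Pow \<Lambda>. wt \<kappa> X * l1 (modes \<Lambda>) (\<Phi> X))"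
    by (rule sum_mono2) (auto simp: assms(1) l1_def intro!: mult_nonneg_nonneg sum_nonneg less_imp_le[OF wt_pos])
  finally show "Fx \<Lambda> \<kappa> \<Phi> x \<le> (\<Sum>X\<in>Pow \<Lambda>. wt \<kappa> X * l1 (modes \<Lambda>) (\<Phi> X))" .
qed

definition Pz :: "site set \<Rightarrow> site set \<Rightarrow> (site set \<times> site set) set" where
  "Pz \<Lambda> Z = {(X,Y). X \<subseteq> \<Lambda> \<and> Y \<subseteq> \<Lambda> \<and> X \<union> Y = Z}"

lemma ad_alt: "ad \<Lambda> A B Z = (\<lambda>S T. \<Sum>p\<in>Pz \<Lambda> Z. comm (modes \<Lambda>) (A (fst p)) (B (snd p)) S T)"
  unfolding ad_def Pz_def by (intro ext sum.cong) auto

lemma Pz_sub: "Pz \<Lambda> Z \<subseteq> Pow \<Lambda> \<times> Pow \<Lambda>" by (auto simp: Pz_def)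

lemma finite_Pz: "finite \<Lambda> \<Longrightarrow> finite (Pz \<Lambda> Z)"
  by (rule finite_subset[OF Pz_sub]) auto

lemma Pz_empty: "\<not> Z \<subseteq> \<Lambda> \<Longrightarrow> Pz \<Lambda> Z = {}" by (auto simp: Pz_def)

lemma inter_alg: "is_interaction \<Lambda> A \<Longrightarrow> X \<subseteq> \<Lambda> \<Longrightarrow> A X \<in> alg (modes \<Lambda>) (modes X)"
  by (simp add: is_interaction_def loc_even_def)

lemma inter_even: "is_interaction \<Lambda> A \<Longrightarrow> X \<subseteq> \<Lambda> \<Longrightarrow> theta (modes \<Lambda>) (A X) = A X"
  by (simp add: is_interaction_def loc_even_def even_theta)

lemma comm_disj: assumes "finite \<Lambda>" "is_interaction \<Lambda> A" "is_interaction \<Lambda> B" "X \<subseteq> \<Lambda>" "Y \<subseteq> \<Lambda>" "X \<inter> Y = {}"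
  shows "comm (modes \<Lambda>) (A X) (B Y) = (\<lambda>S T. 0)"
  using assms by (intro comm_zero[of _ "modes X" "modes Y"] finite_modes modes_disj inter_alg inter_even)

lemma comm_zero_left: "comm M (\<lambda>S T. 0) B = (\<lambda>S T. 0)"
  by (simp add: comm_def opmult_def fun_eq_iff)
lemma comm_zero_right: "comm M A (\<lambda>S T. 0) = (\<lambda>S T. 0)"
  by (simp add: comm_def opmult_def fun_eq_iff)

lemma is_interaction_ad: assumes fin: "finite \<Lambda>" and A: "is_interaction \<Lambda> A" and B: "is_interaction \<Lambda> B"
  shows "is_interaction \<Lambda> (ad \<Lambda> A B)"
  unfolding is_interaction_def
proof (intro allI conjI impI)
  fix Z assume "\<not> Z \<subseteq> \<Lambda>"
  thus "ad \<Lambda> A B Z = (\<lambda>S T. 0)" by (simp add: ad_alt Pz_empty)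
next
  fix Z assume Z: "Z \<subseteq> \<Lambda>"
  let ?M = "modes \<Lambda>"
  have finM: "finite ?M" using fin by (rule finite_modes)
  have "ad \<Lambda> A B Z \<in> alg ?M (modes Z)"
    unfolding ad_alt
  proof (rule alg_sum[OF finite_Pz[OF fin]])
    fix p assume p: "p \<in> Pz \<Lambda> Z"
    hence s: "fst p \<subseteq> \<Lambda>" "snd p \<subseteq> \<Lambda>" "fst p \<union> snd p = Z" by (auto simp: Pz_def)
    show "comm ?M (A (fst p)) (B (snd p)) \<in> alg ?M (modes Z)"
      using s by (intro alg_comm alg_mono[OF inter_alg[OF A]] alg_mono[OF inter_alg[OF B]] modes_mono) auto
  qed
  moreover have "theta ?M (ad \<Lambda> A B Z) = ad \<Lambda> A B Z"
  proof -
    have "theta ?M (ad \<Lambda> A B Z) = (\<lambda>S T. \<Sum>p\<in>Pz \<Lambda> Z. theta ?M (comm ?M (A (fst p)) (B (snd p))) S T)"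
      unfolding ad_alt by (rule theta_sum[OF finM])
    also have "\<dots> = ad \<Lambda> A B Z" unfolding ad_alt
      by (intro ext sum.cong refl) (auto simp: Pz_def theta_comm[OF finM] inter_even[OF A] inter_even[OF B])
    finally show ?thesis .
  qed
  ultimately show "ad \<Lambda> A B Z \<in> loc_even \<Lambda> Z" by (simp add: loc_even_def even_theta)
qed

definition sbound :: "site set \<Rightarrow> interaction \<Rightarrow> nat \<Rightarrow> bool" where
  "sbound \<Lambda> \<Phi> s \<longleftrightarrow> (\<forall>X. X \<subseteq> \<Lambda> \<longrightarrow> \<Phi> X \<noteq> (\<lambda>S T. 0) \<longrightarrow> card X \<le> s)"

lemma sbound_ad: assumes fin: "finite \<Lambda>" and "sbound \<Lambda> A sA" "sbound \<Lambda> B sB"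
  shows "sbound \<Lambda> (ad \<Lambda> A B) (sA + sB)"
  unfolding sbound_def
proof (intro allI impI)
  fix Z assume Z: "Z \<subseteq> \<Lambda>" and nz: "ad \<Lambda> A B Z \<noteq> (\<lambda>S T. 0)"
  have "\<exists>p\<in>Pz \<Lambda> Z. comm (modes \<Lambda>) (A (fst p)) (B (snd p)) \<noteq> (\<lambda>S T. 0)"
  proof (rule ccontr)
    assume "\<not> ?thesis"
    hence "ad \<Lambda> A B Z = (\<lambda>S T. 0)" unfolding ad_alt by (auto simp: fun_eq_iff)
    thus False using nz by simp
  qed
  then obtain X Y where p: "(X,Y) \<in> Pz \<Lambda> Z" and c: "comm (modes \<Lambda>) (A X) (B Y) \<noteq> (\<lambda>S T. 0)" by auto
  have XY: "X \<subseteq> \<Lambda>" "Y \<subseteq> \<Lambda>" "Z = X \<union> Y" using p by (auto simp: Pz_def)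
  have "A X \<noteq> (\<lambda>S T. 0)" using c comm_zero_left by metis
  hence "card X \<le> sA" using assms(2) XY by (auto simp: sbound_def)
  moreover have "B Y \<noteq> (\<lambda>S T. 0)" using c comm_zero_right by metis
  hence "card Y \<le> sB" using assms(3) XY by (auto simp: sbound_def)
  moreover have "card Z \<le> card X + card Y" using XY(3) card_Un_le[of X Y] by simp
  ultimately show "card Z \<le> sA + sB" by linarith
qed

lemma sum_if_filter: "finite A \<Longrightarrow> (\<Sum>X\<in>{X\<in>A. P X}. f X) = (\<Sum>X\<in>A. if P X then f X else 0)"
  by (simp add: sum.inter_filter)

lemma Fx_alt: "finite \<Lambda> \<Longrightarrow> Fx \<Lambda> \<kappa> \<Phi> x = (\<Sum>X\<in>Pow \<Lambda>. if x \<in> X then wt \<kappa> X * opnorm (modes \<Lambda>) (\<Phi> X) else 0)"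
proof -
  assume fin: "finite \<Lambda>"
  have e: "{X. X \<subseteq> \<Lambda> \<and> x \<in> X} = {X\<in>Pow \<Lambda>. x \<in> X}" by auto
  have "Fx \<Lambda> \<kappa> \<Phi> x = (\<Sum>X\<in>{X\<in>Pow \<Lambda>. x \<in> X}. wt \<kappa> X * opnorm (modes \<Lambda>) (\<Phi> X))"
    by (simp only: Fx_def e)
  also have "\<dots> = (\<Sum>X\<in>Pow \<Lambda>. if x \<in> X then wt \<kappa> X * opnorm (modes \<Lambda>) (\<Phi> X) else 0)"
    by (rule sum_if_filter) (simp add: fin)
  finally show ?thesis .
qed

lemma sum_if_const: "(\<Sum>y\<in>B. if P then f y else 0) = (if P then (\<Sum>y\<in>B. f y) else 0)"
  by (cases P) simp_all

lemma sum_if_union: "(\<And>p. p \<in> P \<Longrightarrow> fst p \<union> snd p = Z) \<Longrightarrow>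
  (\<Sum>p\<in>P. if x \<in> fst p \<union> snd p then f p else 0) = (if x \<in> Z then (\<Sum>p\<in>P. f p) else 0)"
proof -
  assume a: "\<And>p. p \<in> P \<Longrightarrow> fst p \<union> snd p = Z"
  have "(\<Sum>p\<in>P. if x \<in> fst p \<union> snd p then f p else 0) = (\<Sum>p\<in>P. if x \<in> Z then f p else 0)"
    by (rule sum.cong[OF refl]) (simp add: a)
  thus ?thesis by (simp add: sum_if_const)
qed

lemma half_bound:
  assumes fin: "finite \<Lambda>" and ne: "\<Lambda> \<noteq> {}" and k: "0 \<le> \<kappa>"
    and sb: "sbound \<Lambda> \<Phi> s" and x: "x \<in> \<Lambda>"
    and g: "\<And>X Y. X \<subseteq> \<Lambda> \<Longrightarrow> Y \<subseteq> \<Lambda> \<Longrightarrow> g X Y \<le>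
        (if X \<inter> Y = {} then 0 else 2 * (wt \<kappa> X * opnorm (modes \<Lambda>) (\<Phi> X)) * (wt \<kappa> Y * opnorm (modes \<Lambda>) (\<Psi> Y)))"
  shows "(\<Sum>X\<in>Pow \<Lambda>. if x \<in> X then (\<Sum>Y\<in>Pow \<Lambda>. g X Y) else 0) \<le> 2 * real s * knorm \<Lambda> \<kappa> \<Phi> * knorm \<Lambda> \<kappa> \<Psi>"
proof -
  let ?M = "modes \<Lambda>"
  have finM: "finite ?M" by (rule finite_modes[OF fin])
  define wA where "wA X = wt \<kappa> X * opnorm ?M (\<Phi> X)" for X
  define wB where "wB Y = wt \<kappa> Y * opnorm ?M (\<Psi> Y)" for Y
  have wA0: "0 \<le> wA X" for X unfolding wA_def using wt_pos[of \<kappa> X] opnorm_nonneg[OF finM] by simp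
  have wB0: "0 \<le> wB X" for X unfolding wB_def using wt_pos[of \<kappa> X] opnorm_nonneg[OF finM] by simp
  have b0: "0 \<le> knorm \<Lambda> \<kappa> \<Psi>" by (rule knorm_nonneg[OF fin ne])
  have inner: "(\<Sum>Y\<in>Pow \<Lambda>. g X Y) \<le> 2 * real s * wA X * knorm \<Lambda> \<kappa> \<Psi>" if X: "X \<subseteq> \<Lambda>" for X
  proof -
    have finX: "finite X" using X fin finite_subset by blast
    have "g X Y \<le> (\<Sum>y\<in>X. if y \<in> Y then 2 * wA X * wB Y else 0)" if Y: "Y \<subseteq> \<Lambda>" for Y
    proof (cases "X \<inter> Y = {}")
      case True
      have "0 \<le> (\<Sum>y\<in>X. if y \<in> Y then 2 * wA X * wB Y else 0)"
        by (intro sum_nonneg) (use wA0 wB0 in auto)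
      thus ?thesis using g[OF X Y] True by simp
    next
      case False
      then obtain y0 where y0: "y0 \<in> X" "y0 \<in> Y" by auto
      have "g X Y \<le> 2 * wA X * wB Y" using g[OF X Y] False by (simp add: wA_def wB_def)
      also have "\<dots> = (if y0 \<in> Y then 2 * wA X * wB Y else 0)" using y0 by simp
      also have "\<dots> \<le> (\<Sum>y\<in>X. if y \<in> Y then 2 * wA X * wB Y else 0)"
        by (rule member_le_sum[OF y0(1)]) (use wA0 wB0 finX in auto)
      finally show ?thesis .
    qed
    hence "(\<Sum>Y\<in>Pow \<Lambda>. g X Y) \<le> (\<Sum>Y\<in>Pow \<Lambda>. \<Sum>y\<in>X. if y \<in> Y then 2 * wA X * wB Y else 0)"
      by (intro sum_mono) auto
    also have "\<dots> = (\<Sum>y\<in>X. \<Sum>Y\<in>Pow \<Lambda>. if y \<in> Y then 2 * wA X * wB Y else 0)"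
      by (rule sum.swap)
    also have "\<dots> = (\<Sum>y\<in>X. 2 * wA X * Fx \<Lambda> \<kappa> \<Psi> y)"
      by (intro sum.cong refl) (simp add: Fx_alt[OF fin] sum_distrib_left wB_def if_distrib cong: if_cong)
    also have "\<dots> \<le> (\<Sum>y\<in>X. 2 * wA X * knorm \<Lambda> \<kappa> \<Psi>)"
      using X wA0 by (intro sum_mono mult_left_mono knorm_upper[OF fin]) auto
    also have "\<dots> = real (card X) * (2 * wA X * knorm \<Lambda> \<kappa> \<Psi>)" by simp
    also have "\<dots> \<le> real s * (2 * wA X * knorm \<Lambda> \<kappa> \<Psi>)"
    proof (cases "\<Phi> X = (\<lambda>S T. 0)")
      case True
      hence "wA X = 0" by (simp add: wA_def opnorm_zero[OF finM])
      thus ?thesis by simp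
    next
      case False
      hence "card X \<le> s" using sb X by (auto simp: sbound_def)
      thus ?thesis using wA0 b0 by (intro mult_right_mono) auto
    qed
    finally show ?thesis by (simp add: ac_simps)
  qed
  have "(\<Sum>X\<in>Pow \<Lambda>. if x \<in> X then (\<Sum>Y\<in>Pow \<Lambda>. g X Y) else 0)
     \<le> (\<Sum>X\<in>Pow \<Lambda>. if x \<in> X then 2 * real s * knorm \<Lambda> \<kappa> \<Psi> * wA X else 0)"
    using inner by (intro sum_mono) (auto simp: ac_simps)
  also have "\<dots> = 2 * real s * knorm \<Lambda> \<kappa> \<Psi> * Fx \<Lambda> \<kappa> \<Phi> x"
    by (simp add: Fx_alt[OF fin] sum_distrib_left wA_def if_distrib cong: if_cong)
  also have "\<dots> \<le> 2 * real s * knorm \<Lambda> \<kappa> \<Psi> * knorm \<Lambda> \<kappa> \<Phi>"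
    using b0 by (intro mult_left_mono knorm_upper[OF fin x]) auto
  finally show ?thesis by (simp add: ac_simps)
qed

lemma ad_knorm:
  assumes fin: "finite \<Lambda>" and ne: "\<Lambda> \<noteq> {}" and k: "0 \<le> \<kappa>"
    and A: "is_interaction \<Lambda> A" and B: "is_interaction \<Lambda> B"
    and sA: "sbound \<Lambda> A sA" and sB: "sbound \<Lambda> B sB"
  shows "knorm \<Lambda> \<kappa> (ad \<Lambda> A B) \<le> 2 * real (sA + sB) * knorm \<Lambda> \<kappa> A * knorm \<Lambda> \<kappa> B"
proof (rule knorm_le[OF ne])
  fix x assume x: "x \<in> \<Lambda>"
  let ?M = "modes \<Lambda>"
  let ?PP = "Pow \<Lambda> \<times> Pow \<Lambda>"
  have finM: "finite ?M" by (rule finite_modes[OF fin])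
  have finPP: "finite ?PP" using fin by simp
  define h where "h X Y = (if X \<inter> Y = {} then 0 else 2 * (wt \<kappa> X * opnorm ?M (A X)) * (wt \<kappa> Y * opnorm ?M (B Y)))" for X Y
  have h0: "0 \<le> h X Y" for X Y
  proof -
    have "0 \<le> wt \<kappa> X * opnorm ?M (A X)" by (rule mult_nonneg_nonneg[OF less_imp_le[OF wt_pos] opnorm_nonneg[OF finM]])
    moreover have "0 \<le> wt \<kappa> Y * opnorm ?M (B Y)" by (rule mult_nonneg_nonneg[OF less_imp_le[OF wt_pos] opnorm_nonneg[OF finM]])
    ultimately show ?thesis unfolding h_def by simp
  qed
  have step1: "wt \<kappa> Z * opnorm ?M (ad \<Lambda> A B Z) \<le> (\<Sum>p\<in>Pz \<Lambda> Z. h (fst p) (snd p))" if Z: "Z \<subseteq> \<Lambda>" for Z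
  proof -
    have "opnorm ?M (ad \<Lambda> A B Z) \<le> (\<Sum>p\<in>Pz \<Lambda> Z. opnorm ?M (comm ?M (A (fst p)) (B (snd p))))"
      unfolding ad_alt by (rule opnorm_sum[OF finM])
    hence "wt \<kappa> Z * opnorm ?M (ad \<Lambda> A B Z) \<le> wt \<kappa> Z * (\<Sum>p\<in>Pz \<Lambda> Z. opnorm ?M (comm ?M (A (fst p)) (B (snd p))))"
      by (rule mult_left_mono) (rule less_imp_le[OF wt_pos])
    hence "wt \<kappa> Z * opnorm ?M (ad \<Lambda> A B Z) \<le> (\<Sum>p\<in>Pz \<Lambda> Z. wt \<kappa> Z * opnorm ?M (comm ?M (A (fst p)) (B (snd p))))"
      by (simp add: sum_distrib_left)
    also have "\<dots> \<le> (\<Sum>p\<in>Pz \<Lambda> Z. h (fst p) (snd p))"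
    proof (rule sum_mono)
      fix p assume p: "p \<in> Pz \<Lambda> Z"
      obtain X Y where pXY: "p = (X,Y)" by (cases p)
      have XY: "X \<subseteq> \<Lambda>" "Y \<subseteq> \<Lambda>" "Z = X \<union> Y" using p unfolding pXY Pz_def by auto
      have fXY: "finite X" "finite Y" using XY fin finite_subset by blast+
      have "wt \<kappa> Z * opnorm ?M (comm ?M (A X) (B Y)) \<le> h X Y"
      proof (cases "X \<inter> Y = {}")
        case True
        have "comm ?M (A X) (B Y) = (\<lambda>S T. 0)" by (rule comm_disj[OF fin A B XY(1,2) True])
        thus ?thesis using True by (simp add: h_def opnorm_zero[OF finM])
      next
        case False
        have w: "wt \<kappa> Z \<le> wt \<kappa> X * wt \<kappa> Y" unfolding XY(3) by (rule wt_Un[OF k fXY])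
        have o: "opnorm ?M (comm ?M (A X) (B Y)) \<le> 2 * opnorm ?M (A X) * opnorm ?M (B Y)"
          by (rule opnorm_comm[OF finM])
        have n1: "0 \<le> wt \<kappa> X * wt \<kappa> Y" by (rule mult_nonneg_nonneg[OF less_imp_le[OF wt_pos] less_imp_le[OF wt_pos]])
        have n2: "0 \<le> opnorm ?M (comm ?M (A X) (B Y))" by (rule opnorm_nonneg[OF finM])
        have "wt \<kappa> Z * opnorm ?M (comm ?M (A X) (B Y)) \<le> (wt \<kappa> X * wt \<kappa> Y) * (2 * opnorm ?M (A X) * opnorm ?M (B Y))"
          by (rule mult_mono[OF w o n1 n2])
        also have "\<dots> = h X Y" using False unfolding h_def by (simp add: algebra_simps)
        finally show ?thesis .
      qed
      thus "wt \<kappa> Z * opnorm ?M (comm ?M (A (fst p)) (B (snd p))) \<le> h (fst p) (snd p)"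
        unfolding pXY by simp
    qed
    finally show ?thesis .
  qed
  define S1 where "S1 = (\<Sum>p\<in>?PP. if x \<in> fst p then h (fst p) (snd p) else 0)"
  define S2 where "S2 = (\<Sum>p\<in>?PP. if x \<in> snd p then h (fst p) (snd p) else 0)"
  have E0: "(\<Sum>Z\<in>Pow \<Lambda>. if x \<in> Z then wt \<kappa> Z * opnorm ?M (ad \<Lambda> A B Z) else 0)
      \<le> (\<Sum>Z\<in>Pow \<Lambda>. \<Sum>p\<in>{p\<in>?PP. fst p \<union> snd p = Z}. if x \<in> fst p \<union> snd p then h (fst p) (snd p) else 0)"
  proof (rule sum_mono)
    fix Z assume Z: "Z \<in> Pow \<Lambda>"
    have e: "{p\<in>?PP. fst p \<union> snd p = Z} = Pz \<Lambda> Z" using Z by (auto simp: Pz_def)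
    have "(\<Sum>p\<in>Pz \<Lambda> Z. if x \<in> fst p \<union> snd p then h (fst p) (snd p) else 0) =
          (if x \<in> Z then (\<Sum>p\<in>Pz \<Lambda> Z. h (fst p) (snd p)) else 0)"
      by (rule sum_if_union) (auto simp: Pz_def)
    thus "(if x \<in> Z then wt \<kappa> Z * opnorm ?M (ad \<Lambda> A B Z) else 0) \<le>
          (\<Sum>p\<in>{p\<in>?PP. fst p \<union> snd p = Z}. if x \<in> fst p \<union> snd p then h (fst p) (snd p) else 0)"
      unfolding e using step1 Z by auto
  qed
  have E1: "(\<Sum>Z\<in>Pow \<Lambda>. \<Sum>p\<in>{p\<in>?PP. fst p \<union> snd p = Z}. if x \<in> fst p \<union> snd p then h (fst p) (snd p) else 0)
      = (\<Sum>p\<in>?PP. if x \<in> fst p \<union> snd p then h (fst p) (snd p) else 0)"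
    by (rule sum.group[OF finPP]) (use fin in auto)
  have E2: "(\<Sum>p\<in>?PP. if x \<in> fst p \<union> snd p then h (fst p) (snd p) else 0) \<le> S1 + S2"
  proof -
    have "(\<Sum>p\<in>?PP. if x \<in> fst p \<union> snd p then h (fst p) (snd p) else 0) \<le>
          (\<Sum>p\<in>?PP. (if x \<in> fst p then h (fst p) (snd p) else 0) + (if x \<in> snd p then h (fst p) (snd p) else 0))"
      using h0 by (intro sum_mono) auto
    also have "\<dots> = S1 + S2" unfolding S1_def S2_def by (rule sum.distrib)
    finally show ?thesis .
  qed
  have E3: "S1 = (\<Sum>X\<in>Pow \<Lambda>. if x \<in> X then (\<Sum>Y\<in>Pow \<Lambda>. h X Y) else 0)"
  proof -
    have "S1 = (\<Sum>X\<in>Pow \<Lambda>. \<Sum>Y\<in>Pow \<Lambda>. if x \<in> X then h X Y else 0)"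
      unfolding S1_def by (simp only: sum.cartesian_product' fst_conv snd_conv)
    also have "\<dots> = (\<Sum>X\<in>Pow \<Lambda>. if x \<in> X then (\<Sum>Y\<in>Pow \<Lambda>. h X Y) else 0)"
      by (rule sum.cong[OF refl]) (rule sum_if_const)
    finally show ?thesis .
  qed
  have E4: "S2 = (\<Sum>Y\<in>Pow \<Lambda>. if x \<in> Y then (\<Sum>X\<in>Pow \<Lambda>. h X Y) else 0)"
  proof -
    have "S2 = (\<Sum>X\<in>Pow \<Lambda>. \<Sum>Y\<in>Pow \<Lambda>. if x \<in> Y then h X Y else 0)"
      unfolding S2_def by (simp only: sum.cartesian_product' fst_conv snd_conv)
    also have "\<dots> = (\<Sum>Y\<in>Pow \<Lambda>. \<Sum>X\<in>Pow \<Lambda>. if x \<in> Y then h X Y else 0)" by (rule sum.swap)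
    also have "\<dots> = (\<Sum>Y\<in>Pow \<Lambda>. if x \<in> Y then (\<Sum>X\<in>Pow \<Lambda>. h X Y) else 0)"
      by (rule sum.cong[OF refl]) (rule sum_if_const)
    finally show ?thesis .
  qed
  have E5: "(\<Sum>X\<in>Pow \<Lambda>. if x \<in> X then (\<Sum>Y\<in>Pow \<Lambda>. h X Y) else 0) \<le> 2 * real sA * knorm \<Lambda> \<kappa> A * knorm \<Lambda> \<kappa> B"
    by (rule half_bound[OF fin ne k sA x]) (simp add: h_def)
  have E6: "(\<Sum>Y\<in>Pow \<Lambda>. if x \<in> Y then (\<Sum>X\<in>Pow \<Lambda>. h X Y) else 0) \<le> 2 * real sB * knorm \<Lambda> \<kappa> B * knorm \<Lambda> \<kappa> A"
    by (rule half_bound[OF fin ne k sB x]) (simp add: h_def Int_commute mult.commute mult.left_commute)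
  have E7: "2 * real sA * knorm \<Lambda> \<kappa> A * knorm \<Lambda> \<kappa> B + 2 * real sB * knorm \<Lambda> \<kappa> B * knorm \<Lambda> \<kappa> A
      = 2 * real (sA + sB) * knorm \<Lambda> \<kappa> A * knorm \<Lambda> \<kappa> B"
    by (simp add: algebra_simps)
  have E8: "Fx \<Lambda> \<kappa> (ad \<Lambda> A B) x = (\<Sum>Z\<in>Pow \<Lambda>. if x \<in> Z then wt \<kappa> Z * opnorm ?M (ad \<Lambda> A B Z) else 0)"
    by (rule Fx_alt[OF fin])
  show "Fx \<Lambda> \<kappa> (ad \<Lambda> A B) x \<le> 2 * real (sA + sB) * knorm \<Lambda> \<kappa> A * knorm \<Lambda> \<kappa> B"
    using E0 E1 E2 E3 E4 E5 E6 E7 E8 by linarith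
qed

lemma lattice_finite: "finite (lattice d L)"
proof -
  have "lattice d L \<subseteq> {xs. set xs \<subseteq> {..<L} \<and> length xs = d}"
    by (auto simp: lattice_def in_set_conv_nth)
  thus ?thesis by (rule finite_subset) (rule finite_lists_length_eq, simp)
qed

lemma lattice_ne: "0 < L \<Longrightarrow> lattice d L \<noteq> {}"
proof -
  assume "0 < L"
  hence "replicate d 0 \<in> lattice d L" by (simp add: lattice_def)
  thus ?thesis by blast
qed

lemma sbound_ssize: assumes fin: "finite \<Lambda>" shows "sbound \<Lambda> \<Phi> (ssize \<Lambda> \<Phi>)"
  unfolding sbound_def ssize_def
proof (intro allI impI)
  fix X assume X: "X \<subseteq> \<Lambda>" and nz: "\<Phi> X \<noteq> (\<lambda>S T. 0)"
  have "{card X |X. X \<subseteq> \<Lambda> \<and> \<Phi> X \<noteq> (\<lambda>S T. 0)} \<subseteq> card ` Pow \<Lambda>" by auto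
  hence f: "finite {card X |X. X \<subseteq> \<Lambda> \<and> \<Phi> X \<noteq> (\<lambda>S T. 0)}"
    by (rule finite_subset) (simp add: fin)
  show "card X \<le> Sup {card X |X. X \<subseteq> \<Lambda> \<and> \<Phi> X \<noteq> (\<lambda>S T. 0)}"
    by (rule le_cSup_finite[OF f]) (use X nz in blast)
qed

lemma sbound_mono: "sbound \<Lambda> \<Phi> s \<Longrightarrow> s \<le> s' \<Longrightarrow> sbound \<Lambda> \<Phi> s'"
  by (auto simp: sbound_def)

lemma ad_sA0: assumes fin: "finite \<Lambda>" and A: "is_interaction \<Lambda> A" and B: "is_interaction \<Lambda> B"
  and s0: "sbound \<Lambda> A 0"
  shows "ad \<Lambda> A B = (\<lambda>Z S T. 0)"
proof (intro ext)
  fix Z S T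
  have "comm (modes \<Lambda>) (A (fst p)) (B (snd p)) = (\<lambda>S T. 0)" if p: "p \<in> Pz \<Lambda> Z" for p
  proof (cases "A (fst p) = (\<lambda>S T. 0)")
    case True thus ?thesis by (simp add: comm_zero_left)
  next
    case False
    have sub: "fst p \<subseteq> \<Lambda>" "snd p \<subseteq> \<Lambda>" using p by (auto simp: Pz_def)
    hence "card (fst p) \<le> 0" using s0 False by (auto simp: sbound_def)
    hence "fst p = {}" using sub fin finite_subset by fastforce
    thus ?thesis using comm_disj[OF fin A B sub] by simp
  qed
  thus "ad \<Lambda> A B Z S T = 0" unfolding ad_alt by simp
qed

lemma ad_empty: assumes fin: "finite \<Lambda>" and A: "is_interaction \<Lambda> A" and B: "is_interaction \<Lambda> B"
  shows "ad \<Lambda> A B {} = (\<lambda>S T. 0)"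
proof -
  have "Pz \<Lambda> {} = {({},{})}" by (auto simp: Pz_def)
  thus ?thesis unfolding ad_alt using comm_disj[OF fin A B, of "{}" "{}"] by simp
qed

lemma entry_le_knorm:
  assumes fin: "finite \<Lambda>" and ne: "\<Lambda> \<noteq> {}" and k: "0 \<le> \<kappa>" and P: "is_interaction \<Lambda> \<Phi>"
    and e: "\<Phi> {} = (\<lambda>S T. 0)"
  shows "cmod (\<Phi> X S T) \<le> knorm \<Lambda> \<kappa> \<Phi>"
proof (cases "X \<subseteq> \<Lambda> \<and> X \<noteq> {} \<and> \<Phi> X S T \<noteq> 0")
  case False
  have "\<Phi> X S T = 0"
  proof (cases "X \<subseteq> \<Lambda>")
    case False
    hence "\<Phi> X = (\<lambda>S T. 0)" using P unfolding is_interaction_def by blast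
    thus ?thesis by simp
  next
    case True
    thus ?thesis using \<open>\<not> (X \<subseteq> \<Lambda> \<and> X \<noteq> {} \<and> \<Phi> X S T \<noteq> 0)\<close> e by auto
  qed
  thus ?thesis using knorm_nonneg[OF fin ne] by simp
next
  case True
  let ?M = "modes \<Lambda>"
  have finM: "finite ?M" by (rule finite_modes[OF fin])
  have XL: "X \<subseteq> \<Lambda>" using True by auto
  have "supp ?M (\<Phi> X)" by (rule alg_supp[OF inter_alg[OF P XL]])
  hence ST: "S \<subseteq> ?M" "T \<subseteq> ?M" using True by (auto simp: supp_def)
  obtain x where x: "x \<in> X" using True by auto
  have xL: "x \<in> \<Lambda>" using x True by auto
  have "cmod (\<Phi> X S T) \<le> opnorm ?M (\<Phi> X)" by (rule opnorm_entry[OF finM ST])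
  also have "\<dots> \<le> wt \<kappa> X * opnorm ?M (\<Phi> X)"
    using wt_ge1[OF k, of X] opnorm_nonneg[OF finM, of "\<Phi> X"] by (simp add: mult_le_cancel_right1)
  also have "\<dots> \<le> Fx \<Lambda> \<kappa> \<Phi> x" unfolding Fx_def
  proof (rule member_le_sum)
    show "X \<in> {X. X \<subseteq> \<Lambda> \<and> x \<in> X}" using True x by auto
    show "finite {X. X \<subseteq> \<Lambda> \<and> x \<in> X}" using fin by simp
  qed (intro mult_nonneg_nonneg less_imp_le[OF wt_pos] opnorm_nonneg[OF finM])
  also have "\<dots> \<le> knorm \<Lambda> \<kappa> \<Phi>" by (rule knorm_upper[OF fin xL])
  finally show ?thesis .
qed

definition qq :: "nat \<Rightarrow> nat \<Rightarrow> real" where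
  "qq sB n = (\<Prod>k<n. real (k + 1 + sB)) / fact n"

definition gg :: "real \<Rightarrow> nat \<Rightarrow> nat \<Rightarrow> real" where
  "gg r sB n = r ^ n * qq sB (Suc n)"

lemma qq_nonneg: "0 \<le> qq sB n"
  unfolding qq_def by (intro divide_nonneg_pos prod_nonneg) auto

lemma qq_Suc: "qq sB (Suc n) = qq sB n * (real (n + 1 + sB) / real (Suc n))"
  unfolding qq_def by (simp add: field_simps)

lemma gg_nonneg: "0 \<le> r \<Longrightarrow> 0 \<le> gg r sB n"
  unfolding gg_def using qq_nonneg by simp

lemma gg_summable: assumes r0: "0 \<le> r" and r1: "r < 1" shows "summable (gg r sB)"
proof -
  define c where "c = (1 + r) / 2"
  have c1: "c < 1" using r1 by (simp add: c_def)
  obtain N :: nat where N: "2 * real sB / (1 - r) \<le> real N" using real_arch_simple by blast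
  show ?thesis
  proof (rule summable_ratio_test[OF c1])
    fix n assume n: "N \<le> n"
    have g0: "0 \<le> gg r sB n" by (rule gg_nonneg[OF r0])
    have eq: "gg r sB (Suc n) = gg r sB n * (r * (real (n + 2 + sB) / real (n + 2)))"
      unfolding gg_def qq_Suc[of sB "Suc n"] by (simp add: field_simps)
    have key: "r * real (n + 2 + sB) \<le> c * real (n + 2)"
    proof -
      have "real sB \<le> (1 - r) / 2 * real N" using N r1 by (simp add: field_simps)
      also have "\<dots> \<le> (1 - r) / 2 * real (n + 2)" using n r1 by (intro mult_left_mono) auto
      finally have a: "real sB \<le> (1 - r) / 2 * real (n + 2)" .
      have "r * real sB \<le> 1 * real sB" using r1 by (intro mult_right_mono) auto
      hence "r * real sB \<le> (1 - r) / 2 * real (n + 2)" using a by linarith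
      thus ?thesis unfolding c_def by (simp add: field_simps)
    qed
    have h: "r * (real (n + 2 + sB) / real (n + 2)) \<le> c"
      using key by (simp add: field_simps)
    have "gg r sB (Suc n) \<le> gg r sB n * c" unfolding eq by (rule mult_left_mono[OF h g0])
    hence "gg r sB (Suc n) \<le> c * gg r sB n" using mult.commute[of "gg r sB n" c] by linarith
    thus "norm (gg r sB (Suc n)) \<le> c * norm (gg r sB n)"
      using g0 gg_nonneg[OF r0, of sB "Suc n"] by simp
  qed
qed

lemma knorm_tendsto:
  assumes fin: "finite \<Lambda>" and ne: "\<Lambda> \<noteq> {}"
    and D: "\<And>X S T. ((\<lambda>N. D N X S T) \<longlongrightarrow> 0) sequentially"
  shows "((\<lambda>N. knorm \<Lambda> \<kappa> (D N)) \<longlongrightarrow> 0) sequentially"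
proof (rule Lim_null_comparison)
  let ?M = "modes \<Lambda>"
  show "\<forall>\<^sub>F N in sequentially. norm (knorm \<Lambda> \<kappa> (D N)) \<le> (\<Sum>X\<in>Pow \<Lambda>. wt \<kappa> X * l1 ?M (D N X))"
    using knorm_le_l1[OF fin ne] knorm_nonneg[OF fin ne] by simp
  show "((\<lambda>N. \<Sum>X\<in>Pow \<Lambda>. wt \<kappa> X * l1 ?M (D N X)) \<longlongrightarrow> 0) sequentially"
  proof (rule tendsto_null_sum)
    fix X
    have "((\<lambda>N. l1 ?M (D N X)) \<longlongrightarrow> 0) sequentially"
      unfolding l1_def
      by (intro tendsto_null_sum tendsto_norm_zero D)
    thus "((\<lambda>N. wt \<kappa> X * l1 ?M (D N X)) \<longlongrightarrow> 0) sequentially"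
      by (rule tendsto_mult_right_zero)
  qed
qed

lemma main:
  fixes sA sB :: nat and \<rho> \<kappa> :: real
  assumes \<rho>1: "\<rho> < 1" and fin: "finite \<Lambda>" and ne: "\<Lambda> \<noteq> {}" and k: "0 \<le> \<kappa>"
    and A: "is_interaction \<Lambda> A" and B: "is_interaction \<Lambda> B"
    and sbA: "sbound \<Lambda> A sA" and sbB: "sbound \<Lambda> B sB"
    and hyp: "2 * real sA * knorm \<Lambda> \<kappa> A \<le> \<rho>"
  shows "summable (\<lambda>n. knorm \<Lambda> \<kappa> ((ad \<Lambda> A ^^ Suc n) B) / fact (Suc n)) \<and>
     (\<Sum>n. knorm \<Lambda> \<kappa> ((ad \<Lambda> A ^^ Suc n) B) / fact (Suc n))
        \<le> (2 * real sA * suminf (gg (max \<rho> 0) sB)) * knorm \<Lambda> \<kappa> A * knorm \<Lambda> \<kappa> B \<and>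
     (\<lambda>N. knorm \<Lambda> \<kappa> (\<lambda>X S T. bch_partial \<Lambda> A B N X S T - bch \<Lambda> A B X S T)) \<longlonglongrightarrow> 0 \<and>
     knorm \<Lambda> \<kappa> (bch \<Lambda> A B) \<le> (2 * real sA * suminf (gg (max \<rho> 0) sB)) * knorm \<Lambda> \<kappa> A * knorm \<Lambda> \<kappa> B"
proof -
  define r where "r = max \<rho> 0"
  define K where "K = suminf (gg r sB)"
  define a where "a = knorm \<Lambda> \<kappa> A"
  define b where "b = knorm \<Lambda> \<kappa> B"
  define x where "x = 2 * real sA * a"
  define Bn where "Bn n = (ad \<Lambda> A ^^ n) B" for n
  define P where "P n = (\<Prod>k<n. real (k + 1 + sB))" for n
  have r0: "0 \<le> r" and r1: "r < 1" using \<rho>1 by (auto simp: r_def)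
  have a0: "0 \<le> a" unfolding a_def by (rule knorm_nonneg[OF fin ne])
  have b0: "0 \<le> b" unfolding b_def by (rule knorm_nonneg[OF fin ne])
  have x0: "0 \<le> x" unfolding x_def using a0 by simp
  have xr: "x \<le> r" using hyp by (simp add: x_def a_def r_def)
  have P0: "0 \<le> P n" for n unfolding P_def by (intro prod_nonneg) auto
  have P_Suc: "P (Suc n) = P n * real (n + 1 + sB)" for n unfolding P_def by simp
  have Bn_Suc: "Bn (Suc n) = ad \<Lambda> A (Bn n)" for n by (simp add: Bn_def)
  have Bint: "is_interaction \<Lambda> (Bn n)" for n
  proof (induction n)
    case 0 thus ?case using B by (simp add: Bn_def)
  next
    case (Suc n) thus ?case unfolding Bn_Suc by (rule is_interaction_ad[OF fin A])
  qed
  have Bsb: "sbound \<Lambda> (Bn n) (sB + n * sA)" for n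
  proof (induction n)
    case 0 thus ?case using sbB by (simp add: Bn_def)
  next
    case (Suc n)
    have "sbound \<Lambda> (ad \<Lambda> A (Bn n)) (sA + (sB + n * sA))" by (rule sbound_ad[OF fin sbA Suc])
    moreover have "sA + (sB + n * sA) = sB + Suc n * sA" by simp
    ultimately show ?case unfolding Bn_Suc by simp
  qed
  have Bnorm: "knorm \<Lambda> \<kappa> (Bn n) \<le> x ^ n * P n * b" for n
  proof (induction n)
    case 0 thus ?case by (simp add: Bn_def b_def P_def)
  next
    case (Suc n)
    have rhs0: "0 \<le> x ^ Suc n * P (Suc n) * b" using x0 P0 b0 by simp
    show ?case
    proof (cases "sA = 0")
      case True
      have "Bn (Suc n) = (\<lambda>Z S T. 0)" unfolding Bn_Suc
        by (rule ad_sA0[OF fin A Bint]) (use sbA True in simp)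
      thus ?thesis using knorm_zero[OF fin ne] rhs0 by simp
    next
      case False
      have n1: "sB \<le> sA * sB" using False by simp
      have "sA + (sB + n * sA) \<le> sA * (n + 1 + sB)" using n1 by (simp add: algebra_simps)
      hence "real (sA + (sB + n * sA)) \<le> real sA * real (n + 1 + sB)"
        by (metis of_nat_le_iff of_nat_mult)
      hence c1a: "2 * real (sA + (sB + n * sA)) * a \<le> 2 * (real sA * real (n + 1 + sB)) * a"
        using a0 by (intro mult_right_mono) auto
      have c1: "2 * real (sA + (sB + n * sA)) * a \<le> x * real (n + 1 + sB)"
        using c1a by (simp add: x_def algebra_simps)
      have c0: "0 \<le> x * real (n + 1 + sB)" using x0 by simp
      have kn0: "0 \<le> knorm \<Lambda> \<kappa> (Bn n)" by (rule knorm_nonneg[OF fin ne])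
      have "knorm \<Lambda> \<kappa> (Bn (Suc n)) \<le> 2 * real (sA + (sB + n * sA)) * a * knorm \<Lambda> \<kappa> (Bn n)"
        unfolding Bn_Suc a_def by (rule ad_knorm[OF fin ne k A Bint sbA Bsb])
      also have "\<dots> \<le> (x * real (n + 1 + sB)) * (x ^ n * P n * b)"
        by (rule mult_mono[OF c1 Suc c0 kn0])
      also have "\<dots> = x ^ Suc n * P (Suc n) * b" by (simp add: P_Suc algebra_simps)
      finally show ?thesis .
    qed
  qed
  define t where "t n = knorm \<Lambda> \<kappa> (Bn (Suc n)) / fact (Suc n)" for n
  have t0: "0 \<le> t n" for n unfolding t_def using knorm_nonneg[OF fin ne] by simp
  have tb: "t n \<le> x * b * gg r sB n" for n
  proof -
    have "t n \<le> x ^ Suc n * P (Suc n) * b / fact (Suc n)"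
      unfolding t_def by (rule divide_right_mono[OF Bnorm]) simp
    also have "\<dots> = x ^ Suc n * qq sB (Suc n) * b" by (simp add: qq_def P_def)
    also have "\<dots> = x * x ^ n * (qq sB (Suc n) * b)" by simp
    also have "\<dots> \<le> x * r ^ n * (qq sB (Suc n) * b)"
      using power_mono[OF xr x0, of n] x0 qq_nonneg[of sB "Suc n"] b0
      by (intro mult_right_mono mult_left_mono) auto
    also have "\<dots> = x * b * gg r sB n" by (simp add: gg_def)
    finally show ?thesis .
  qed
  have gsum: "summable (gg r sB)" by (rule gg_summable[OF r0 r1])
  have gsum2: "summable (\<lambda>n. x * b * gg r sB n)" by (rule summable_mult[OF gsum])
  have tsum: "summable t"
    by (rule summable_comparison_test'[OF gsum2]) (use t0 tb in simp)
  have tsuminf: "suminf t \<le> x * b * K"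
  proof -
    have "suminf t \<le> suminf (\<lambda>n. x * b * gg r sB n)" by (rule suminf_le[OF tb tsum gsum2])
    also have "\<dots> = x * b * K" unfolding K_def by (rule suminf_mult[OF gsum])
    finally show ?thesis .
  qed
  have Cab: "x * b * K = (2 * real sA * suminf (gg (max \<rho> 0) sB)) * knorm \<Lambda> \<kappa> A * knorm \<Lambda> \<kappa> B"
    by (simp add: x_def K_def r_def a_def b_def algebra_simps)
  define e where "e n X S T = Bn (Suc n) X S T / of_real (fact (Suc n))" for n X S T
  have Bn_empty: "Bn (Suc n) {} = (\<lambda>S T. 0)" for n
    unfolding Bn_Suc by (rule ad_empty[OF fin A Bint])
  have e_le: "norm (e n X S T) \<le> t n" for n X S T
  proof -
    have "cmod (Bn (Suc n) X S T) \<le> knorm \<Lambda> \<kappa> (Bn (Suc n))"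
      by (rule entry_le_knorm[OF fin ne k Bint Bn_empty])
    hence "cmod (Bn (Suc n) X S T) / fact (Suc n) \<le> knorm \<Lambda> \<kappa> (Bn (Suc n)) / fact (Suc n)"
      by (rule divide_right_mono) (rule fact_ge_zero)
    moreover have "norm (e n X S T) = cmod (Bn (Suc n) X S T) / fact (Suc n)"
      unfolding e_def norm_divide norm_of_real by simp
    ultimately show ?thesis unfolding t_def by simp
  qed
  have esum: "summable (\<lambda>n. e n X S T)" for X S T
    by (rule summable_comparison_test'[OF tsum]) (rule e_le)
  have bch_eq: "bch \<Lambda> A B X S T = (\<Sum>n. e n X S T)" for X S T
    by (simp add: bch_def e_def Bn_def)
  have part_eq: "bch_partial \<Lambda> A B N X S T = (\<Sum>n<N. e n X S T)" for N X S T
  proof -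
    have "bch_partial \<Lambda> A B N X S T = (\<Sum>n\<in>{Suc 0..N}. (Bn n) X S T / of_real (fact n))"
      by (simp add: bch_partial_def Bn_def)
    also have "\<dots> = (\<Sum>n<N. e n X S T)" unfolding e_def by (rule sum.atLeast1_atMost_eq)
    finally show ?thesis .
  qed
  have lim1: "((\<lambda>N. bch_partial \<Lambda> A B N X S T - bch \<Lambda> A B X S T) \<longlongrightarrow> 0) sequentially" for X S T
    unfolding part_eq bch_eq by (rule LIM_zero[OF summable_LIMSEQ[OF esum]])
  have lim2: "((\<lambda>N. bch \<Lambda> A B X S T - bch_partial \<Lambda> A B N X S T) \<longlongrightarrow> 0) sequentially" for X S T
    using tendsto_minus[OF lim1[of X S T]] by simp
  have conj3: "(\<lambda>N. knorm \<Lambda> \<kappa> (\<lambda>X S T. bch_partial \<Lambda> A B N X S T - bch \<Lambda> A B X S T)) \<longlonglongrightarrow> 0"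
    by (rule knorm_tendsto[OF fin ne]) (rule lim1)
  have conj3': "(\<lambda>N. knorm \<Lambda> \<kappa> (\<lambda>X S T. bch \<Lambda> A B X S T - bch_partial \<Lambda> A B N X S T)) \<longlonglongrightarrow> 0"
    by (rule knorm_tendsto[OF fin ne]) (rule lim2)
  have part_le: "knorm \<Lambda> \<kappa> (bch_partial \<Lambda> A B N) \<le> x * b * K" for N
  proof -
    have pe: "bch_partial \<Lambda> A B N = (\<lambda>X S T. \<Sum>n<N. e n X S T)" by (intro ext) (rule part_eq)
    have ee: "e n = (\<lambda>X S T. inverse (of_real (fact (Suc n))) * Bn (Suc n) X S T)" for n
      by (intro ext) (simp add: e_def divide_inverse mult.commute)
    have ke: "knorm \<Lambda> \<kappa> (e n) \<le> t n" for n
    proof -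
      have "knorm \<Lambda> \<kappa> (e n) \<le> cmod (inverse (of_real (fact (Suc n)))) * knorm \<Lambda> \<kappa> (Bn (Suc n))"
        unfolding ee by (rule knorm_smult[OF fin ne])
      moreover have "cmod (inverse (of_real (fact (Suc n)) :: complex)) = inverse (fact (Suc n))"
        by (simp add: norm_inverse del: fact_Suc)
      ultimately show ?thesis by (simp add: t_def divide_inverse mult.commute del: fact_Suc)
    qed
    have "knorm \<Lambda> \<kappa> (bch_partial \<Lambda> A B N) \<le> (\<Sum>n<N. knorm \<Lambda> \<kappa> (e n))"
      unfolding pe by (rule knorm_sum[OF fin ne]) simp
    also have "\<dots> \<le> (\<Sum>n<N. t n)" by (intro sum_mono ke)
    also have "\<dots> \<le> suminf t" by (rule sum_le_suminf[OF tsum]) (use t0 in auto)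
    also have "\<dots> \<le> x * b * K" by (rule tsuminf)
    finally show ?thesis .
  qed
  have bch_le_N: "knorm \<Lambda> \<kappa> (bch \<Lambda> A B) \<le> x * b * K + knorm \<Lambda> \<kappa> (\<lambda>X S T. bch \<Lambda> A B X S T - bch_partial \<Lambda> A B N X S T)" for N
  proof -
    have be: "bch \<Lambda> A B = (\<lambda>X S T. bch_partial \<Lambda> A B N X S T + (bch \<Lambda> A B X S T - bch_partial \<Lambda> A B N X S T))"
      by (intro ext) simp
    have "knorm \<Lambda> \<kappa> (bch \<Lambda> A B) \<le> knorm \<Lambda> \<kappa> (bch_partial \<Lambda> A B N) + knorm \<Lambda> \<kappa> (\<lambda>X S T. bch \<Lambda> A B X S T - bch_partial \<Lambda> A B N X S T)"
      by (subst be, rule knorm_add[OF fin ne])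
    thus ?thesis using part_le[of N] by linarith
  qed
  have conj4: "knorm \<Lambda> \<kappa> (bch \<Lambda> A B) \<le> x * b * K"
  proof -
    have "(\<lambda>N. x * b * K + knorm \<Lambda> \<kappa> (\<lambda>X S T. bch \<Lambda> A B X S T - bch_partial \<Lambda> A B N X S T)) \<longlonglongrightarrow> x * b * K + 0"
      by (rule tendsto_add[OF tendsto_const conj3'])
    hence l: "(\<lambda>N. x * b * K + knorm \<Lambda> \<kappa> (\<lambda>X S T. bch \<Lambda> A B X S T - bch_partial \<Lambda> A B N X S T)) \<longlonglongrightarrow> x * b * K"
      by simp
    show ?thesis by (rule LIMSEQ_le_const[OF l]) (use bch_le_N in blast)
  qed
  have tdef: "(\<lambda>n. knorm \<Lambda> \<kappa> ((ad \<Lambda> A ^^ Suc n) B) / fact (Suc n)) = t"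
    by (simp add: t_def Bn_def fun_eq_iff)
  show ?thesis unfolding tdef
    using tsum tsuminf conj3 conj4 Cab by simp
qed

theorem lemma2p2:
  fixes sA sB :: nat and \<rho> :: real
  assumes "\<rho> < 1"
  shows "\<exists>C_BCH :: real. \<forall>(d::nat) (L::nat) (\<kappa>::real) A B.
     let \<Lambda> = lattice d L in
     (d \<ge> 1 \<and> L > 0 \<and> even L \<and> \<kappa> \<ge> 0 \<and>
      is_interaction \<Lambda> A \<and> is_interaction \<Lambda> B \<and>
      finite_range L \<Lambda> A \<and> finite_range L \<Lambda> B \<and>
      ssize \<Lambda> A = sA \<and> ssize \<Lambda> B = sB \<and>
      2 * real sA * knorm \<Lambda> \<kappa> A \<le> \<rho>)
     \<longrightarrow>
     summable (\<lambda>n. knorm \<Lambda> \<kappa> ((ad \<Lambda> A ^^ Suc n) B) / fact (Suc n)) \<and>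
     (\<Sum>n. knorm \<Lambda> \<kappa> ((ad \<Lambda> A ^^ Suc n) B) / fact (Suc n))
        \<le> C_BCH * knorm \<Lambda> \<kappa> A * knorm \<Lambda> \<kappa> B \<and>
     (\<lambda>N. knorm \<Lambda> \<kappa> (\<lambda>X S T. bch_partial \<Lambda> A B N X S T - bch \<Lambda> A B X S T)) \<longlonglongrightarrow> 0 \<and>
     knorm \<Lambda> \<kappa> (bch \<Lambda> A B) \<le> C_BCH * knorm \<Lambda> \<kappa> A * knorm \<Lambda> \<kappa> B"
  apply (rule exI[of _ "2 * real sA * suminf (gg (max \<rho> 0) sB)"])
  apply (intro allI)
  apply (unfold Let_def)
  apply (intro impI)
  apply (elim conjE)
  apply (rule main[OF assms])
         apply (rule lattice_finite)
        apply (erule lattice_ne)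
       apply assumption
      apply assumption
     apply assumption
    apply (metis sbound_ssize lattice_finite)
   apply (metis sbound_ssize lattice_finite)
  apply assumption
  done

end
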